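(* In the setting of the context, let $(x_0,y_0)\in\mathcal D^+_{\bar y}$, let $T_0=T(x_0,y_0)$ and $T_1=T_0+\dfrac{h(x_0,y_0)-\bar x}{\gamma\bar y}$. Define $\tilde x(t)=h(x_0,y_0)-\gamma(t-T_0)\bar y$ and the control $$u^*(t)=\begin{cases}0 & \text{if } t<T_0 \text{ or } t>T_1,\\ \rho(\tilde x(t),\bar y) & \text{if } T_0\le t\le T_1.\end{cases}$$ Let $(x^*(t),y^*(t))$ be the solution of the controlled CBF-SIR model with initial condition $(x_0,y_0)$ under $u^*$. Then: (i) for $T_0<t<T_1$, $x^*(t)=h(x_0,y_0)-\gamma(t-T_0)\bar y$ and $y^*(t)=\bar y$; (ii) $u^*(t)=\mu(x^*(t),y^*(t))$ for every $t\ge0$, where $\mu(x,y)=0$ if $y<\bar y$ and $\mu(x,\bar y)=[\rho(x,\bar y)]_+$; (iii) $u^*$ is feasible, i.e. $y^*(t)\le\bar y$ for all $t\ge0$; (iv) $J(u^* )=\displaystyle\int_0^{\infty}u^*(t)\,dt=\frac{1}{\gamma\bar y}\int_{\bar x}^{h(x_0,y_0)}\rho(x,\bar y)\,dx.$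
   Context: $\mathcal S=\{(x,y)\in\mathbb R^2_+: x+y\le1\}$, $\gamma>0$, $\beta:\mathcal S\to(0,\infty)$ of class $\mathcal C^2$, $R(x,y)=\frac1\gamma\beta(x,y)x$, and for $x>0$, $\rho(x,y)=\frac{R(x,y)-1}{R(x,y)}=1-\frac{\gamma}{x\beta(x,y)}$; $[a]_+=\max\{a,0\}$. Assumption 1 holds: $x\beta_x+\beta>0$ and $\beta_y\le0$ on $\mathcal S$. Controlled CBF-SIR model: $\dot x=-(1-u(t))\gamma R(x,y)y$, $\dot y=\gamma((1-u(t))R(x,y)-1)y$ (solutions continuous, piecewise-$\mathcal C^1$, in $\mathcal S$); uncontrolled model: $u\equiv0$, with flow $\phi(t,x_0,y_0)$; $\Gamma^+(x_0,y_0)=\{\phi(t,x_0,y_0):t\ge0\}$, $\Gamma^-(x,y)=\{(x_0,y_0)\in\mathcal S:(x,y)\in\Gamma^+(x_0,y_0)\}$. Assume $\beta(1,0)>\gamma$; $\tilde y\in(0,1)$ is the unique number with $R(1-\tilde y,\tilde y)=1$, $\kappa:[0,\tilde y]\to[0,1]$ the $\mathcal C^1$ function with $\{R=1\}\cap\mathcal S=\{(\kappa(y),y):y\in[0,\tilde y]\}$. Fix $\bar y\in(0,\tilde y)$ and $\bar x=\kappa(\bar y)$. There are $\hat y\in[0,\bar y]$ and a $\mathcal C^1$ strictly decreasing $\lambda:[\hat y,\bar y]\to[\bar x,1]$ with $\lambda(\bar y)=\bar x$ and $\overline{\Gamma^-(\bar x,\bar y)}=\{(\lambda(y),y):\hat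 y\le y\le\bar y\}$. $\mathcal D_{\bar y}=\{(x,y)\in\mathcal S:0<y\le\bar y\}$, $\mathcal D^+_{\bar y}=\{(x,y)\in\mathcal D_{\bar y}: y\in[\hat y,\bar y],\ x>\lambda(y)\}$, $\mathcal J=\{(x,\bar y)\in\mathcal S:\bar x<x\le1-\bar y\}$. For $(x,y)\in\mathcal D^+_{\bar y}$, $T(x,y)$ is the (finite) first time $t\ge0$ with $\phi(t,x,y)\in\mathcal J$ and $h(x,y)$ is the first coordinate of $\phi(T(x,y),x,y)$. A control is feasible if the corresponding solution satisfies $y(t)\le\bar y$ for all $t\ge0$. *)

theory Defs
  imports "HOL-Analysis.Analysis"
begin

definition SS :: "(real \<times> real) set" where
  "SS = {(x, y). 0 \<le> x \<and> 0 \<le> y \<and> x + y \<le> 1}"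

definition Rn :: "real \<Rightarrow> (real \<Rightarrow> real \<Rightarrow> real) \<Rightarrow> real \<Rightarrow> real \<Rightarrow> real" where
  "Rn \<gamma> \<beta> x y = \<beta> x y * x / \<gamma>"

definition rho :: "real \<Rightarrow> (real \<Rightarrow> real \<Rightarrow> real) \<Rightarrow> real \<Rightarrow> real \<Rightarrow> real" where
  "rho \<gamma> \<beta> x y = 1 - \<gamma> / (x * \<beta> x y)"

definition pos_part :: "real \<Rightarrow> real" where
  "pos_part a = max a 0"

text \<open>Solution of the controlled CBF-SIR model with control u, initial point p:
  continuous on [0,oo), staying in S, piecewise C1 (satisfying the ODE off a
  locally finite set of break points).\<close>
definition cbf_sol ::
  "real \<Rightarrow> (real \<Rightarrow> real \<Rightarrow> real) \<Rightarrow> (real \<Rightarrow> real) \<Rightarrow> real \<times> real \<Rightarrow> (real \<Rightarrow> real \<times> real) \<Rightarrow> bool" where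
  "cbf_sol \<gamma> \<beta> u p z \<longleftrightarrow>
     z 0 = p \<and> continuous_on {0..} z \<and> (\<forall>t\<ge>0. z t \<in> SS) \<and>
     (\<exists>F. (\<forall>b. finite (F \<inter> {0..b})) \<and>
        (\<forall>t\<in>{0<..} - F.
           (z has_vector_derivative
              (- (1 - u t) * \<gamma> * Rn \<gamma> \<beta> (fst (z t)) (snd (z t)) * snd (z t),
               \<gamma> * ((1 - u t) * Rn \<gamma> \<beta> (fst (z t)) (snd (z t)) - 1) * snd (z t))) (at t)))"

definition Gamma_minus :: "(real \<Rightarrow> real \<times> real \<Rightarrow> real \<times> real) \<Rightarrow> real \<times> real \<Rightarrow> (real \<times> real) set" where
  "Gamma_minus phi q = {p \<in> SS. \<exists>t\<ge>0. phi t p = q}"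

definition D_plus :: "real \<Rightarrow> real \<Rightarrow> (real \<Rightarrow> real) \<Rightarrow> (real \<times> real) set" where
  "D_plus ybar yhat lam = {(x, y) \<in> SS. 0 < y \<and> y \<le> ybar \<and> yhat \<le> y \<and> lam y < x}"

definition J_set :: "real \<Rightarrow> real \<Rightarrow> (real \<times> real) set" where
  "J_set xbar ybar = {(x, y) \<in> SS. y = ybar \<and> xbar < x \<and> x \<le> 1 - ybar}"

definition T_hit :: "(real \<Rightarrow> real \<times> real \<Rightarrow> real \<times> real) \<Rightarrow> real \<Rightarrow> real \<Rightarrow> real \<times> real \<Rightarrow> real" where
  "T_hit phi xbar ybar p = (LEAST t. 0 \<le> t \<and> phi t p \<in> J_set xbar ybar)"

definition h_hit :: "(real \<Rightarrow> real \<times> real \<Rightarrow> real \<times> real) \<Rightarrow> real \<Rightarrow> real \<Rightarrow> real \<times> real \<Rightarrow> real" where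
  "h_hit phi xbar ybar p = fst (phi (T_hit phi xbar ybar p) p)"

definition mu :: "real \<Rightarrow> (real \<Rightarrow> real \<Rightarrow> real) \<Rightarrow> real \<Rightarrow> real \<Rightarrow> real \<Rightarrow> real" where
  "mu \<gamma> \<beta> ybar x y = (if y < ybar then 0 else pos_part (rho \<gamma> \<beta> x ybar))"

end

theory Submission
  imports Defs
begin
lemma mono_fin:
  fixes f :: "real \<Rightarrow> real"
  assumes S: "finite S" and ab: "a \<le> b" and cont: "continuous_on {a..b} f"
    and der: "\<And>t. t \<in> {a<..<b} - S \<Longrightarrow> (f has_real_derivative f' t) (at t)"
    and pos: "\<And>t. t \<in> {a<..<b} - S \<Longrightarrow> f' t \<ge> 0"
  shows "f a \<le> f b"
proof -
  define g where "g t = (if t \<in> {a<..<b} - S then f' t else 0)" for t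
  have "(g has_integral (f b - f a)) {a..b}"
    apply (rule fundamental_theorem_of_calculus_interior_strong[OF S ab _ cont])
    using der by (simp add: g_def has_real_derivative_iff_has_vector_derivative)
  moreover have "\<And>t. t \<in> {a..b} \<Longrightarrow> 0 \<le> g t" using pos by (simp add: g_def)
  ultimately have "0 \<le> f b - f a" by (rule has_integral_nonneg)
  then show ?thesis by simp
qed

lemma mono_fin_strict:
  fixes f :: "real \<Rightarrow> real"
  assumes S: "finite S" and ab: "a < b" and cont: "continuous_on {a..b} f"
    and der: "\<And>t. t \<in> {a<..<b} - S \<Longrightarrow> (f has_real_derivative f' t) (at t)"
    and pos: "\<And>t. t \<in> {a<..<b} - S \<Longrightarrow> f' t > 0"
  shows "f a < f b"
proof -
  have mono: "f c \<le> f d" if "a \<le> c" "c \<le> d" "d \<le> b" for c d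
    apply (rule mono_fin[OF S \<open>c \<le> d\<close>, of f f'])
    using that cont der pos by (auto intro: continuous_on_subset less_imp_le)
  have "f a \<le> f b" using mono ab by simp
  moreover have "f a \<noteq> f b"
  proof
    assume eq: "f a = f b"
    have const: "f t = f a" if "t \<in> {a..b}" for t
      using mono[of a t] mono[of t b] that eq by auto
    have "infinite ({a<..<b} :: real set)" using ab by simp
    then have "infinite ({a<..<b} - S)" using Diff_infinite_finite[OF S] by blast
    then obtain t where t: "t \<in> {a<..<b} - S" by (metis ex_in_conv finite.emptyI)
    define d where "d = min (t - a) (b - t)"
    have d: "d > 0" using t by (auto simp: d_def)
    have "f' t = 0"
    proof (rule DERIV_local_const[OF der[OF t] d], intro allI impI)
      fix y assume "\<bar>t - y\<bar> < d"
      then have "y \<in> {a..b}" "t \<in> {a..b}" using t unfolding d_def by (auto simp: abs_less_iff)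
      then show "f t = f y" using const by metis
    qed
    with pos[OF t] show False by simp
  qed
  ultimately show ?thesis by simp
qed

lemma gronwall_zero:
  fixes w :: "real \<Rightarrow> 'a::real_inner"
  assumes S: "finite S" and ab: "a \<le> b" and cont: "continuous_on {a..b} w" and w0: "w a = 0"
    and der: "\<And>t. t \<in> {a<..<b} - S \<Longrightarrow> (w has_vector_derivative w' t) (at t)"
    and lip: "\<And>t. t \<in> {a<..<b} - S \<Longrightarrow> norm (w' t) \<le> L * norm (w t)"
  shows "w b = 0"
proof -
  define g where "g t = - (exp (- 2 * L * t) * (w t \<bullet> w t))" for t
  have "g a \<le> g b"
  proof (rule mono_fin[OF S ab])
    show "continuous_on {a..b} g" unfolding g_def
      by (intro continuous_intros cont)
    fix t assume t: "t \<in> {a<..<b} - S"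
    have d1: "((\<lambda>t. w t \<bullet> w t) has_real_derivative (2 * (w t \<bullet> w' t))) (at t)"
    proof -
      have "(w has_derivative (\<lambda>h. h *\<^sub>R w' t)) (at t)" using der[OF t] by (simp add: has_vector_derivative_def)
      from has_derivative_inner[OF this this]
      have "((\<lambda>t. w t \<bullet> w t) has_derivative (\<lambda>h. w t \<bullet> (h *\<^sub>R w' t) + (h *\<^sub>R w' t) \<bullet> w t)) (at t)" .
      moreover have "(\<lambda>h. w t \<bullet> (h *\<^sub>R w' t) + (h *\<^sub>R w' t) \<bullet> w t) = (*) (2 * (w t \<bullet> w' t))"
        by (rule ext) (simp add: inner_commute algebra_simps)
      ultimately show ?thesis unfolding has_field_derivative_def by simp
    qed
    show "(g has_real_derivative
       - (exp (- 2 * L * t) * (- 2 * L) * (w t \<bullet> w t) + exp (- 2 * L * t) * (2 * (w t \<bullet> w' t)))) (at t)"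
      unfolding g_def
      by (auto intro!: derivative_eq_intros d1)
    have "w t \<bullet> w' t \<le> norm (w t) * norm (w' t)" by (rule norm_cauchy_schwarz)
    also have "\<dots> \<le> norm (w t) * (L * norm (w t))" by (rule mult_left_mono[OF lip[OF t]]) simp
    finally have "w t \<bullet> w' t \<le> L * (norm (w t) * norm (w t))" by (simp add: algebra_simps)
    then have "w t \<bullet> w' t \<le> L * (w t \<bullet> w t)" by (simp add: dot_square_norm power2_eq_square)
    then have "2 * (w t \<bullet> w' t) - 2 * L * (w t \<bullet> w t) \<le> 0" by simp
    then have "exp (- 2 * L * t) * (2 * (w t \<bullet> w' t) - 2 * L * (w t \<bullet> w t)) \<le> 0"
      by (simp add: mult_nonneg_nonpos)
    then show "0 \<le> - (exp (- 2 * L * t) * (- 2 * L) * (w t \<bullet> w t) + exp (- 2 * L * t) * (2 * (w t \<bullet> w' t)))"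
      by (simp add: algebra_simps)
  qed
  then have "exp (- 2 * L * b) * (w b \<bullet> w b) \<le> 0" using w0 by (simp add: g_def)
  then have "w b \<bullet> w b \<le> 0" by (simp add: mult_le_0_iff)
  then show ?thesis using inner_gt_zero_iff[of "w b"] by linarith
qed

lemma SS_alt: "SS = {p. 0 \<le> fst p \<and> 0 \<le> snd p \<and> fst p + snd p \<le> 1}"
  by (auto simp: SS_def)

lemma SS_closed: "closed SS"
  unfolding SS_alt by (intro closed_Collect_conj closed_Collect_le continuous_intros)

lemma SS_bounded: "bounded SS"
proof -
  have "SS \<subseteq> cball 0 2"
  proof
    fix p assume "p \<in> SS"
    then have "\<bar>fst p\<bar> \<le> 1" "\<bar>snd p\<bar> \<le> 1" by (auto simp: SS_alt)
    then have "norm p \<le> 2" using norm_Pair_le[of "fst p" "snd p"] by simp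
    then show "p \<in> cball 0 2" by simp
  qed
  then show ?thesis using bounded_cball bounded_subset by blast
qed

lemma SS_compact: "compact SS"
  using SS_closed SS_bounded compact_eq_bounded_closed by blast

lemma SS_convex: "convex SS"
  unfolding convex_def
proof (intro ballI allI impI)
  fix p q :: "real \<times> real" and u v :: real
  assume p: "p \<in> SS" and q: "q \<in> SS" and uv: "0 \<le> u" "0 \<le> v" "u + v = 1"
  obtain a b where ab: "p = (a, b)" by (cases p)
  obtain c d where cd: "q = (c, d)" by (cases q)
  have h: "0 \<le> a" "0 \<le> b" "a + b \<le> 1" "0 \<le> c" "0 \<le> d" "c + d \<le> 1" using p q ab cd by (auto simp: SS_def)
  have "u * (a + b) \<le> u * 1" "v * (c + d) \<le> v * 1" using h uv by (intro mult_left_mono; simp)+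
  then have "u * a + v * c + (u * b + v * d) \<le> 1" using uv by (simp add: algebra_simps)
  moreover have "0 \<le> u * a + v * c" "0 \<le> u * b + v * d" using h uv by simp_all
  ultimately show "u *\<^sub>R p + v *\<^sub>R q \<in> SS" using ab cd by (simp add: SS_def)
qed

lemma abs_mult_le1: "\<bar>a\<bar> \<le> 1 \<Longrightarrow> \<bar>b\<bar> \<le> c \<Longrightarrow> \<bar>a * b\<bar> \<le> (c::real)"
proof -
  assume "\<bar>a\<bar> \<le> 1" "\<bar>b\<bar> \<le> c"
  then have "\<bar>a\<bar> * \<bar>b\<bar> \<le> 1 * \<bar>b\<bar>" by (intro mult_right_mono) auto
  then show ?thesis using \<open>\<bar>b\<bar> \<le> c\<close> by (simp add: abs_mult)
qed

lemma abs_fst_le: "\<bar>fst (v::real\<times>real)\<bar> \<le> norm v"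
  by (metis norm_fst_le prod.collapse real_norm_def)
lemma abs_snd_le: "\<bar>snd (v::real\<times>real)\<bar> \<le> norm v"
  by (metis norm_snd_le prod.collapse real_norm_def)

lemma cont_bound:
  fixes f :: "real \<times> real \<Rightarrow> real"
  assumes "continuous_on SS f"
  obtains M where "\<And>p. p \<in> SS \<Longrightarrow> \<bar>f p\<bar> \<le> M"
proof -
  have "bounded (f ` SS)" by (rule compact_imp_bounded[OF compact_continuous_image[OF assms SS_compact]])
  then obtain M where "\<forall>x\<in>f ` SS. norm x \<le> M" by (auto simp: bounded_iff)
  then show ?thesis using that by auto
qed

definition vf :: "real \<Rightarrow> (real \<Rightarrow> real \<Rightarrow> real) \<Rightarrow> real \<Rightarrow> real \<times> real \<Rightarrow> real \<times> real" where
  "vf \<gamma> \<beta> c p = (- (1 - c) * \<gamma> * Rn \<gamma> \<beta> (fst p) (snd p) * snd p,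
                  \<gamma> * ((1 - c) * Rn \<gamma> \<beta> (fst p) (snd p) - 1) * snd p)"

locale sir =
  fixes \<gamma> :: real and \<beta> :: "real \<Rightarrow> real \<Rightarrow> real" and b1 b2 :: "real \<times> real \<Rightarrow> real" and U :: "(real \<times> real) set"
  assumes gpos: "\<gamma> > 0"
    and bpos: "\<And>x y. (x, y) \<in> SS \<Longrightarrow> \<beta> x y > 0"
    and Uopen: "open U" and SSU: "SS \<subseteq> U"
    and bder: "\<And>p. p \<in> U \<Longrightarrow> ((\<lambda>q. \<beta> (fst q) (snd q)) has_derivative (\<lambda>v. b1 p * fst v + b2 p * snd v)) (at p)"
    and bxc: "continuous_on U b1" and byc: "continuous_on U b2"
    and a1: "\<And>x y. (x, y) \<in> SS \<Longrightarrow> x * b1 (x, y) + \<beta> x y > 0"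
begin

abbreviation B where "B q \<equiv> \<beta> (fst q) (snd q)"

lemma B_cont: "continuous_on SS (\<lambda>q. \<beta> (fst q) (snd q))"
proof (rule continuous_at_imp_continuous_on, rule ballI)
  fix p assume "p \<in> SS"
  then show "isCont (\<lambda>q. \<beta> (fst q) (snd q)) p" using bder SSU has_derivative_continuous by blast
qed

lemma B_lip: obtains L where "\<And>p q. p \<in> SS \<Longrightarrow> q \<in> SS \<Longrightarrow> \<bar>B p - B q\<bar> \<le> L * norm (p - q)"
proof -
  obtain Mx where Mx: "\<And>p. p \<in> SS \<Longrightarrow> \<bar>b1 p\<bar> \<le> Mx"
    using cont_bound continuous_on_subset[OF bxc SSU] by blast
  obtain My where My: "\<And>p. p \<in> SS \<Longrightarrow> \<bar>b2 p\<bar> \<le> My"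
    using cont_bound continuous_on_subset[OF byc SSU] by blast
  have "\<bar>B p - B q\<bar> \<le> (Mx + My) * norm (p - q)" if p: "p \<in> SS" and q: "q \<in> SS" for p q
  proof -
    have "norm (B p - B q) \<le> (Mx + My) * norm (p - q)"
    proof (rule differentiable_bound[OF SS_convex _ _ p q])
      fix x assume x: "x \<in> SS"
      show "((\<lambda>q. \<beta> (fst q) (snd q)) has_derivative (\<lambda>v. b1 x * fst v + b2 x * snd v)) (at x within SS)"
        using bder[of x] x SSU by (auto intro: has_derivative_at_withinI)
      show "onorm (\<lambda>v. b1 x * fst v + b2 x * snd v) \<le> Mx + My"
      proof (rule onorm_le)
        fix v :: "real \<times> real"
        have "norm (b1 x * fst v + b2 x * snd v) \<le> \<bar>b1 x\<bar> * \<bar>fst v\<bar> + \<bar>b2 x\<bar> * \<bar>snd v\<bar>"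
          by (simp add: abs_mult[symmetric] abs_triangle_ineq)
        also have "\<dots> \<le> Mx * norm v + My * norm v"
          using Mx[OF x] My[OF x] abs_fst_le[of v] abs_snd_le[of v]
          by (intro add_mono mult_mono) auto
        finally show "norm (b1 x * fst v + b2 x * snd v) \<le> (Mx + My) * norm v" by (simp add: algebra_simps)
      qed
    qed
    then show ?thesis by simp
  qed
  then show ?thesis using that by blast
qed

lemma B_bound: obtains M where "\<And>p. p \<in> SS \<Longrightarrow> \<bar>B p\<bar> \<le> M"
  using cont_bound[OF B_cont] by blast

lemma vf_lip: obtains L where "\<And>c p q. c \<in> {0..1} \<Longrightarrow> p \<in> SS \<Longrightarrow> q \<in> SS \<Longrightarrow> norm (vf \<gamma> \<beta> c p - vf \<gamma> \<beta> c q) \<le> L * norm (p - q)"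
proof -
  obtain Lb where Lb: "\<And>p q. p \<in> SS \<Longrightarrow> q \<in> SS \<Longrightarrow> \<bar>B p - B q\<bar> \<le> Lb * norm (p - q)" using B_lip by blast
  obtain M where M: "\<And>p. p \<in> SS \<Longrightarrow> \<bar>B p\<bar> \<le> M" using B_bound by blast
  define k where "k p = B p * fst p * snd p" for p
  have kl: "\<bar>k p - k q\<bar> \<le> (Lb + 2 * M) * norm (p - q)" if p: "p \<in> SS" and q: "q \<in> SS" for p q
  proof -
    have bnd: "\<bar>fst p\<bar> \<le> 1" "\<bar>snd p\<bar> \<le> 1" "\<bar>fst q\<bar> \<le> 1" "\<bar>snd q\<bar> \<le> 1" using p q by (auto simp: SS_def)
    have e: "k p - k q = (B p - B q) * (fst p * snd p) + B q * (fst p * (snd p - snd q) + (fst p - fst q) * snd q)"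
      by (simp add: k_def algebra_simps)
    have "\<bar>fst p * snd p\<bar> \<le> 1" using bnd by (simp add: abs_mult mult_le_one)
    then have t1: "\<bar>(B p - B q) * (fst p * snd p)\<bar> \<le> Lb * norm (p - q)"
      using Lb[OF p q] abs_mult_le1[of "fst p * snd p" "B p - B q"] by (simp add: mult.commute)
    have n1: "\<bar>snd p - snd q\<bar> \<le> norm (p - q)" "\<bar>fst p - fst q\<bar> \<le> norm (p - q)"
      using abs_fst_le[of "p - q"] abs_snd_le[of "p - q"] by auto
    have "\<bar>fst p * (snd p - snd q)\<bar> \<le> norm (p - q)"
      using bnd n1 abs_mult_le1 by blast
    moreover have "\<bar>(fst p - fst q) * snd q\<bar> \<le> norm (p - q)"
      using bnd n1 abs_mult_le1[of "snd q" "fst p - fst q"] by (simp add: mult.commute)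
    ultimately have "\<bar>fst p * (snd p - snd q) + (fst p - fst q) * snd q\<bar> \<le> 2 * norm (p - q)" by linarith
    then have t2: "\<bar>B q * (fst p * (snd p - snd q) + (fst p - fst q) * snd q)\<bar> \<le> M * (2 * norm (p - q))"
      using M[OF q] by (simp add: abs_mult mult_mono)
    have "\<bar>k p - k q\<bar> \<le> \<bar>(B p - B q) * (fst p * snd p)\<bar> + \<bar>B q * (fst p * (snd p - snd q) + (fst p - fst q) * snd q)\<bar>"
      unfolding e by (rule abs_triangle_ineq)
    then show ?thesis using t1 t2 by (simp add: algebra_simps)
  qed
  have "norm (vf \<gamma> \<beta> c p - vf \<gamma> \<beta> c q) \<le> (2 * (Lb + 2 * M) + \<gamma>) * norm (p - q)"
    if c: "c \<in> {0..1}" and p: "p \<in> SS" and q: "q \<in> SS" for c p q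
  proof -
    have vfe: "vf \<gamma> \<beta> c r = (- (1 - c) * k r, (1 - c) * k r - \<gamma> * snd r)" for r
      using gpos by (simp add: vf_def Rn_def k_def field_simps)
    have c1: "\<bar>1 - c\<bar> \<le> 1" using c by auto
    have a: "\<bar>(1 - c) * (k p - k q)\<bar> \<le> (Lb + 2 * M) * norm (p - q)"
      using kl[OF p q] c1 abs_mult_le1 by blast
    have g: "\<bar>\<gamma> * (snd p - snd q)\<bar> \<le> \<gamma> * norm (p - q)"
      using abs_snd_le[of "p - q"] gpos by (simp add: abs_mult)
    have "norm (vf \<gamma> \<beta> c p - vf \<gamma> \<beta> c q) \<le> \<bar>- (1 - c) * (k p - k q)\<bar> + \<bar>(1 - c) * (k p - k q) - \<gamma> * (snd p - snd q)\<bar>"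
      using norm_Pair_le[of "- (1 - c) * (k p - k q)" "(1 - c) * (k p - k q) - \<gamma> * (snd p - snd q)"]
      by (simp add: vfe algebra_simps)
    also have "\<dots> \<le> (2 * (Lb + 2 * M) + \<gamma>) * norm (p - q)"
    proof -
      have "\<bar>(1 - c) * (k p - k q) - \<gamma> * (snd p - snd q)\<bar> \<le> \<bar>(1 - c) * (k p - k q)\<bar> + \<bar>\<gamma> * (snd p - snd q)\<bar>"
        by (rule abs_triangle_ineq4)
      moreover have "\<bar>- (1 - c) * (k p - k q)\<bar> = \<bar>(1 - c) * (k p - k q)\<bar>" by (simp only: mult_minus_left abs_minus_cancel)
      ultimately show ?thesis using a g by (simp add: algebra_simps)
    qed
    finally show ?thesis .
  qed
  then show ?thesis using that by blast
qed

lemma uniq: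
  fixes z1 z2 :: "real \<Rightarrow> real \<times> real"
  assumes S: "finite S" and ab: "a \<le> b"
    and c1: "continuous_on {a..b} z1" and c2: "continuous_on {a..b} z2"
    and s1: "\<And>t. t \<in> {a..b} \<Longrightarrow> z1 t \<in> SS" and s2: "\<And>t. t \<in> {a..b} \<Longrightarrow> z2 t \<in> SS"
    and d1: "\<And>t. t \<in> {a<..<b} - S \<Longrightarrow> (z1 has_vector_derivative vf \<gamma> \<beta> (u t) (z1 t)) (at t)"
    and d2: "\<And>t. t \<in> {a<..<b} - S \<Longrightarrow> (z2 has_vector_derivative vf \<gamma> \<beta> (u t) (z2 t)) (at t)"
    and u: "\<And>t. t \<in> {a<..<b} \<Longrightarrow> u t \<in> {0..1}"
    and init: "z1 a = z2 a"
  shows "z1 b = z2 b"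
proof -
  obtain L where L: "\<And>c p q. c \<in> {0..1} \<Longrightarrow> p \<in> SS \<Longrightarrow> q \<in> SS \<Longrightarrow> norm (vf \<gamma> \<beta> c p - vf \<gamma> \<beta> c q) \<le> L * norm (p - q)"
    using vf_lip by blast
  have "(\<lambda>t. z1 t - z2 t) b = 0"
  proof (rule gronwall_zero[OF S ab])
    show "continuous_on {a..b} (\<lambda>t. z1 t - z2 t)" using c1 c2 by (intro continuous_intros)
    show "z1 a - z2 a = 0" using init by simp
    fix t assume t: "t \<in> {a<..<b} - S"
    show "((\<lambda>t. z1 t - z2 t) has_vector_derivative vf \<gamma> \<beta> (u t) (z1 t) - vf \<gamma> \<beta> (u t) (z2 t)) (at t)"
      by (intro derivative_intros d1 d2 t)
    show "norm (vf \<gamma> \<beta> (u t) (z1 t) - vf \<gamma> \<beta> (u t) (z2 t)) \<le> L * norm (z1 t - z2 t)"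
      using t by (intro L u s1 s2) auto
  qed
  then show ?thesis by simp
qed

end

lemma hvd_shift:
  assumes "(f has_vector_derivative v) (at (t + s))"
  shows "((\<lambda>t. f (t + s)) has_vector_derivative v) (at t)"
proof -
  have "((\<lambda>t. t + s) has_vector_derivative 1) (at t)" by (auto intro!: derivative_eq_intros)
  from vector_diff_chain_at[OF this] assms show ?thesis by (simp add: o_def)
qed

lemma hvd_fst:
  assumes "(z has_vector_derivative v) F"
  shows "((\<lambda>t. fst (z t)) has_real_derivative fst v) F"
proof -
  have "((\<lambda>t. fst (z t)) has_derivative (\<lambda>h. fst (h *\<^sub>R v))) F"
    using assms unfolding has_vector_derivative_def by (rule has_derivative_fst)
  moreover have "(\<lambda>h. fst (h *\<^sub>R v)) = (*) (fst v)" by (rule ext) simp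
  ultimately show ?thesis by (simp add: has_field_derivative_def)
qed

lemma hvd_snd:
  assumes "(z has_vector_derivative v) F"
  shows "((\<lambda>t. snd (z t)) has_real_derivative snd v) F"
proof -
  have "((\<lambda>t. snd (z t)) has_derivative (\<lambda>h. snd (h *\<^sub>R v))) F"
    using assms unfolding has_vector_derivative_def by (rule has_derivative_snd)
  moreover have "(\<lambda>h. snd (h *\<^sub>R v)) = (*) (snd v)" by (rule ext) simp
  ultimately show ?thesis by (simp add: has_field_derivative_def)
qed

lemma cbf_der:
  assumes "cbf_sol \<gamma> \<beta> u p z" "0 \<le> a"
  obtains S where "finite S" "\<And>t. t \<in> {a<..<b} - S \<Longrightarrow> (z has_vector_derivative vf \<gamma> \<beta> (u t) (z t)) (at t)"
proof -
  obtain F where F: "\<forall>b. finite (F \<inter> {0..b})"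
    "\<forall>t\<in>{0<..} - F. (z has_vector_derivative
              (- (1 - u t) * \<gamma> * Rn \<gamma> \<beta> (fst (z t)) (snd (z t)) * snd (z t),
               \<gamma> * ((1 - u t) * Rn \<gamma> \<beta> (fst (z t)) (snd (z t)) - 1) * snd (z t))) (at t)"
    using assms(1) unfolding cbf_sol_def by blast
  show ?thesis
  proof (rule that[of "F \<inter> {0..b}"])
    show "finite (F \<inter> {0..b})" using F(1) by blast
    fix t assume "t \<in> {a<..<b} - F \<inter> {0..b}"
    then have "t \<in> {0<..} - F" using assms(2) by auto
    then show "(z has_vector_derivative vf \<gamma> \<beta> (u t) (z t)) (at t)" using F(2) by (simp add: vf_def)
  qed
qed

lemma cbf_cont: "cbf_sol \<gamma> \<beta> u p z \<Longrightarrow> 0 \<le> a \<Longrightarrow> continuous_on {a..b} z"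
  unfolding cbf_sol_def by (auto intro: continuous_on_subset)

lemma cbf_SS: "cbf_sol \<gamma> \<beta> u p z \<Longrightarrow> 0 \<le> t \<Longrightarrow> z t \<in> SS"
  unfolding cbf_sol_def by auto

lemma cbf_init: "cbf_sol \<gamma> \<beta> u p z \<Longrightarrow> z 0 = p"
  unfolding cbf_sol_def by auto

lemma cbf_shift:
  assumes sol: "cbf_sol \<gamma> \<beta> u p z" and s: "0 \<le> s"
  shows "cbf_sol \<gamma> \<beta> (\<lambda>t. u (t + s)) (z s) (\<lambda>t. z (t + s))"
proof -
  obtain F where F: "\<forall>b. finite (F \<inter> {0..b})"
    "\<forall>t\<in>{0<..} - F. (z has_vector_derivative
              (- (1 - u t) * \<gamma> * Rn \<gamma> \<beta> (fst (z t)) (snd (z t)) * snd (z t),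
               \<gamma> * ((1 - u t) * Rn \<gamma> \<beta> (fst (z t)) (snd (z t)) - 1) * snd (z t))) (at t)"
    and c: "continuous_on {0..} z" and ss: "\<forall>t\<ge>0. z t \<in> SS"
    using sol unfolding cbf_sol_def by blast
  define G where "G = (\<lambda>t. t - s) ` F"
  have "finite (G \<inter> {0..b})" for b
  proof -
    have "G \<inter> {0..b} \<subseteq> (\<lambda>t. t - s) ` (F \<inter> {0..b + s})" using s by (auto simp: G_def)
    then show ?thesis using F(1) finite_surj by blast
  qed
  moreover have "continuous_on {0..} (\<lambda>t. z (t + s))"
  proof -
    have "continuous_on {0..} (\<lambda>t. t + s)" by (intro continuous_intros)
    moreover have "(\<lambda>t. t + s) ` {0..} \<subseteq> {0..}" using s by auto
    ultimately show ?thesis using continuous_on_compose2[OF c] by blast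
  qed
  moreover have "\<forall>t\<in>{0<..} - G. ((\<lambda>t. z (t + s)) has_vector_derivative
              (- (1 - u (t + s)) * \<gamma> * Rn \<gamma> \<beta> (fst (z (t + s))) (snd (z (t + s))) * snd (z (t + s)),
               \<gamma> * ((1 - u (t + s)) * Rn \<gamma> \<beta> (fst (z (t + s))) (snd (z (t + s))) - 1) * snd (z (t + s)))) (at t)"
  proof
    fix t assume t: "t \<in> {0<..} - G"
    then have "t + s \<in> {0<..} - F" using s by (auto simp: G_def image_iff)
    then show "((\<lambda>t. z (t + s)) has_vector_derivative
              (- (1 - u (t + s)) * \<gamma> * Rn \<gamma> \<beta> (fst (z (t + s))) (snd (z (t + s))) * snd (z (t + s)),
               \<gamma> * ((1 - u (t + s)) * Rn \<gamma> \<beta> (fst (z (t + s))) (snd (z (t + s))) - 1) * snd (z (t + s)))) (at t)"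
      using F(2) hvd_shift by blast
  qed
  ultimately show ?thesis using ss s unfolding cbf_sol_def by (auto intro!: exI[of _ G])
qed

context sir
begin

lemma cbf_uniq:
  assumes s1: "cbf_sol \<gamma> \<beta> u1 p z1" and s2: "cbf_sol \<gamma> \<beta> u2 p z2" and b: "0 \<le> b"
    and u: "\<And>t. t \<in> {0<..<b} \<Longrightarrow> u1 t = u2 t \<and> u1 t \<in> {0..1}"
  shows "z1 b = z2 b"
proof -
  obtain S1 where S1: "finite S1" "\<And>t. t \<in> {0<..<b} - S1 \<Longrightarrow> (z1 has_vector_derivative vf \<gamma> \<beta> (u1 t) (z1 t)) (at t)"
    using cbf_der[OF s1, of 0 b] by auto
  obtain S2 where S2: "finite S2" "\<And>t. t \<in> {0<..<b} - S2 \<Longrightarrow> (z2 has_vector_derivative vf \<gamma> \<beta> (u2 t) (z2 t)) (at t)"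
    using cbf_der[OF s2, of 0 b] by auto
  show ?thesis
  proof (rule uniq[of "S1 \<union> S2" 0 b z1 z2 u1])
    show "finite (S1 \<union> S2)" using S1 S2 by simp
    show "continuous_on {0..b} z1" "continuous_on {0..b} z2" using cbf_cont[OF s1] cbf_cont[OF s2] by auto
    show "\<And>t. t \<in> {0..b} \<Longrightarrow> z1 t \<in> SS" "\<And>t. t \<in> {0..b} \<Longrightarrow> z2 t \<in> SS"
      using cbf_SS[OF s1] cbf_SS[OF s2] by auto
    show "\<And>t. t \<in> {0<..<b} - (S1 \<union> S2) \<Longrightarrow> (z1 has_vector_derivative vf \<gamma> \<beta> (u1 t) (z1 t)) (at t)"
      using S1 by auto
    show "\<And>t. t \<in> {0<..<b} - (S1 \<union> S2) \<Longrightarrow> (z2 has_vector_derivative vf \<gamma> \<beta> (u1 t) (z2 t)) (at t)"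
    proof -
      fix t assume t: "t \<in> {0<..<b} - (S1 \<union> S2)"
      then have "u1 t = u2 t" using u by auto
      then show "(z2 has_vector_derivative vf \<gamma> \<beta> (u1 t) (z2 t)) (at t)" using S2(2)[of t] t by simp
    qed
    show "\<And>t. t \<in> {0<..<b} \<Longrightarrow> u1 t \<in> {0..1}" using u by blast
    show "z1 0 = z2 0" using cbf_init[OF s1] cbf_init[OF s2] by simp
  qed (use b in simp_all)
qed

lemma Rn_nonneg: "(x, y) \<in> SS \<Longrightarrow> 0 \<le> Rn \<gamma> \<beta> x y"
  using bpos[of x y] gpos by (auto simp: Rn_def SS_def)

lemma cbf_y_pos:
  assumes sol: "cbf_sol \<gamma> \<beta> u p z" and u: "\<And>t. 0 < t \<Longrightarrow> u t \<le> 1" and p: "snd p > 0" and t: "0 \<le> t"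
  shows "snd (z t) > 0"
proof -
  define g where "g t = exp (\<gamma> * t) * snd (z t)" for t
  obtain S where S: "finite S" "\<And>r. r \<in> {0<..<t} - S \<Longrightarrow> (z has_vector_derivative vf \<gamma> \<beta> (u r) (z r)) (at r)"
    using cbf_der[OF sol, of 0 t] by auto
  have "g 0 \<le> g t"
  proof (rule mono_fin[OF S(1) t])
    show "continuous_on {0..t} g" unfolding g_def using cbf_cont[OF sol, of 0 t]
      by (intro continuous_intros) auto
    fix r assume r: "r \<in> {0<..<t} - S"
    have d: "((\<lambda>r. snd (z r)) has_real_derivative snd (vf \<gamma> \<beta> (u r) (z r))) (at r)"
      by (rule hvd_snd[OF S(2)[OF r]])
    show "(g has_real_derivative exp (\<gamma> * r) * \<gamma> * snd (z r) + exp (\<gamma> * r) * snd (vf \<gamma> \<beta> (u r) (z r))) (at r)"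
      unfolding g_def by (auto intro!: derivative_eq_intros d)
    have zr: "z r \<in> SS" using cbf_SS[OF sol, of r] r by auto
    then have "0 \<le> Rn \<gamma> \<beta> (fst (z r)) (snd (z r))" "0 \<le> snd (z r)" using Rn_nonneg[of "fst (z r)" "snd (z r)"]
      by (auto simp: SS_def split: prod.splits)
    moreover have "0 \<le> 1 - u r" using u[of r] r by auto
    ultimately have "0 \<le> exp (\<gamma> * r) * \<gamma> * ((1 - u r) * Rn \<gamma> \<beta> (fst (z r)) (snd (z r)) * snd (z r))"
      using gpos by (intro mult_nonneg_nonneg) auto
    then show "0 \<le> exp (\<gamma> * r) * \<gamma> * snd (z r) + exp (\<gamma> * r) * snd (vf \<gamma> \<beta> (u r) (z r))"
      by (simp add: vf_def algebra_simps)
  qed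
  then have "0 < g t" using p cbf_init[OF sol] by (simp add: g_def)
  then show ?thesis by (simp add: g_def zero_less_mult_iff)
qed

lemma cbf_x_mono:
  assumes sol: "cbf_sol \<gamma> \<beta> u p z" and u: "\<And>t. 0 < t \<Longrightarrow> u t \<le> 1" and st: "0 \<le> s" "s \<le> t"
  shows "fst (z t) \<le> fst (z s)"
proof -
  obtain S where S: "finite S" "\<And>r. r \<in> {s<..<t} - S \<Longrightarrow> (z has_vector_derivative vf \<gamma> \<beta> (u r) (z r)) (at r)"
    using cbf_der[OF sol st(1), of t] by auto
  have "(\<lambda>r. - fst (z r)) s \<le> (\<lambda>r. - fst (z r)) t"
  proof (rule mono_fin[OF S(1) st(2)])
    show "continuous_on {s..t} (\<lambda>r. - fst (z r))" using cbf_cont[OF sol st(1), of t]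
      by (intro continuous_intros) auto
    fix r assume r: "r \<in> {s<..<t} - S"
    show "((\<lambda>r. - fst (z r)) has_real_derivative - fst (vf \<gamma> \<beta> (u r) (z r))) (at r)"
      by (intro derivative_intros hvd_fst S(2) r)
    have zr: "z r \<in> SS" using cbf_SS[OF sol, of r] r st by auto
    then have "0 \<le> Rn \<gamma> \<beta> (fst (z r)) (snd (z r))" "0 \<le> snd (z r)" using Rn_nonneg[of "fst (z r)" "snd (z r)"]
      by (auto simp: SS_def split: prod.splits)
    moreover have "0 \<le> 1 - u r" using u[of r] r st by auto
    ultimately have "(u r - 1) * \<gamma> * Rn \<gamma> \<beta> (fst (z r)) (snd (z r)) * snd (z r) \<le> 0"
      using gpos by (intro mult_nonpos_nonneg) (auto intro!: mult_nonpos_nonneg)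
    then show "0 \<le> - fst (vf \<gamma> \<beta> (u r) (z r))"
      by (simp add: vf_def)
  qed
  then show ?thesis by simp
qed

end

lemma first_cross:
  fixes g :: "real \<Rightarrow> real"
  assumes ab: "a \<le> b" and cont: "continuous_on {a..b} g" and ga: "g a < c" and gb: "c \<le> g b"
  obtains s where "a < s" "s \<le> b" "g s = c" "\<And>r. a \<le> r \<Longrightarrow> r < s \<Longrightarrow> g r < c"
proof -
  define A where "A = {a..b} \<inter> g -` {c..}"
  have cl: "closed A" unfolding A_def by (rule continuous_closed_preimage[OF cont]) auto
  have ne: "A \<noteq> {}" using ab gb by (auto simp: A_def)
  have bd: "bdd_below A" by (auto simp: A_def bdd_below_def)
  define s where "s = Inf A"
  have sA: "s \<in> A" unfolding s_def by (rule closed_contains_Inf[OF ne bd cl])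
  have low: "s \<le> r" if "r \<in> A" for r unfolding s_def using that bd by (rule cInf_lower)
  have below: "g r < c" if "a \<le> r" "r < s" for r
  proof (rule ccontr)
    assume "\<not> g r < c"
    then have "r \<in> A" using that sA by (auto simp: A_def)
    then show False using low[of r] that by simp
  qed
  have s1: "a \<le> s" "s \<le> b" "c \<le> g s" using sA by (auto simp: A_def)
  have s2: "a \<noteq> s" using s1 ga by auto
  have "g s \<le> c"
  proof (rule ccontr)
    assume "\<not> g s \<le> c"
    then obtain x where x: "a \<le> x" "x \<le> s" "g x = c"
      using IVT'[of g a c s] ga s1 continuous_on_subset[OF cont, of "{a..s}"] by auto
    then have "x < s" using \<open>\<not> g s \<le> c\<close> by (cases "x = s") auto
    then show False using below[of x] x by simp
  qed
  then show ?thesis using that[of s] s1 s2 below by auto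
qed

lemma cont_pos_nbhd:
  fixes f :: "real \<Rightarrow> real"
  assumes "continuous_on A f" "s \<in> A" "f s > 0"
  obtains d where "d > 0" "\<And>t. t \<in> A \<Longrightarrow> \<bar>t - s\<bar> < d \<Longrightarrow> f t > 0"
proof -
  obtain d where d: "d > 0" "\<forall>t\<in>A. dist t s < d \<longrightarrow> dist (f t) (f s) < f s"
    using assms(1)[unfolded continuous_on_iff, rule_format, OF assms(2,3)] by blast
  show ?thesis
  proof (rule that[OF d(1)])
    fix t assume "t \<in> A" "\<bar>t - s\<bar> < d"
    then have "dist (f t) (f s) < f s" using d(2) by (simp add: dist_real_def)
    then show "f t > 0" by (simp add: dist_real_def abs_less_iff)
  qed
qed

context sir
begin

definition Bf where "Bf q = \<beta> (fst q) (snd q)"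
definition dR where "dR p v = ((b1 p * fst v + b2 p * snd v) * fst p + Bf p * fst v) / \<gamma>"

lemma Bf_cont: "continuous_on SS Bf"
  using B_cont unfolding Bf_def by simp

lemma Rn_Bf: "Rn \<gamma> \<beta> (fst p) (snd p) = Bf p * fst p / \<gamma>"
  by (simp add: Rn_def Bf_def)

lemma Rq_der:
  assumes p: "p \<in> U"
  shows "((\<lambda>q. Rn \<gamma> \<beta> (fst q) (snd q)) has_derivative dR p) (at p)"
proof -
  have "((\<lambda>q. Bf q * fst q) has_derivative (\<lambda>h. Bf p * fst h + (b1 p * fst h + b2 p * snd h) * fst p)) (at p)"
    using has_derivative_mult[OF bder[OF p] has_derivative_fst[OF has_derivative_ident]]
    unfolding Bf_def by simp
  then have "((\<lambda>q. inverse \<gamma> * (Bf q * fst q)) has_derivative (\<lambda>h. inverse \<gamma> * (Bf p * fst h + (b1 p * fst h + b2 p * snd h) * fst p))) (at p)"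
    by (rule has_derivative_mult_right)
  then have "((\<lambda>q. Bf q * fst q / \<gamma>) has_derivative (\<lambda>h. (Bf p * fst h + (b1 p * fst h + b2 p * snd h) * fst p) / \<gamma>)) (at p)"
    by (simp add: divide_inverse mult.commute)
  moreover have "(\<lambda>h. (Bf p * fst h + (b1 p * fst h + b2 p * snd h) * fst p) / \<gamma>) = dR p"
    by (rule ext) (simp add: dR_def algebra_simps)
  ultimately show ?thesis by (simp add: Rn_Bf)
qed

lemma Rq_chain:
  assumes d: "(z has_vector_derivative v) (at t)" and zt: "z t \<in> U"
  shows "((\<lambda>t. Rn \<gamma> \<beta> (fst (z t)) (snd (z t))) has_real_derivative dR (z t) v) (at t)"
proof -
  have "(z has_derivative (\<lambda>h. h *\<^sub>R v)) (at t)" using d by (simp add: has_vector_derivative_def)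
  from diff_chain_at[OF this Rq_der[OF zt]]
  have "((\<lambda>q. Rn \<gamma> \<beta> (fst q) (snd q)) \<circ> z has_derivative dR (z t) \<circ> (\<lambda>h. h *\<^sub>R v)) (at t)" .
  moreover have "dR (z t) \<circ> (\<lambda>h. h *\<^sub>R v) = (*) (dR (z t) v)"
    by (rule ext) (simp add: dR_def algebra_simps add_divide_distrib[symmetric])
  ultimately show ?thesis by (simp add: has_field_derivative_def o_def)
qed

lemma psi_cont: "continuous_on SS (\<lambda>p. dR p (vf \<gamma> \<beta> 0 p))"
proof -
  have b1c: "continuous_on SS b1" and b2c: "continuous_on SS b2"
    using continuous_on_subset[OF bxc SSU] continuous_on_subset[OF byc SSU] by auto
  show ?thesis unfolding dR_def vf_def Rn_Bf fst_conv snd_conv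
    by (intro continuous_intros b1c b2c Bf_cont) (use gpos in auto)
qed

lemma psi_neg:
  assumes p: "p \<in> SS" and y: "snd p > 0" and R1: "Rn \<gamma> \<beta> (fst p) (snd p) = 1"
  shows "dR p (vf \<gamma> \<beta> 0 p) < 0"
proof -
  have "vf \<gamma> \<beta> 0 p = (- \<gamma> * snd p, 0)" using R1 by (simp add: vf_def)
  then have e: "dR p (vf \<gamma> \<beta> 0 p) = - snd p * (fst p * b1 p + Bf p)"
    using gpos by (simp add: dR_def field_simps)
  have "fst p * b1 (fst p, snd p) + \<beta> (fst p) (snd p) > 0" using a1[of "fst p" "snd p"] p by simp
  then have "fst p * b1 p + Bf p > 0" by (simp add: Bf_def)
  then show ?thesis using e y by (simp add: mult_pos_pos)
qed

lemma R_cont: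
  assumes sol: "cbf_sol \<gamma> \<beta> u p z" and a: "0 \<le> a"
  shows "continuous_on {a..b} (\<lambda>t. Rn \<gamma> \<beta> (fst (z t)) (snd (z t)))"
proof -
  have c: "continuous_on {a..b} z" using cbf_cont[OF sol a] .
  have "z ` {a..b} \<subseteq> SS" using cbf_SS[OF sol] a by auto
  then have "continuous_on {a..b} (\<lambda>t. Bf (z t))" using continuous_on_compose2[OF Bf_cont c] by blast
  then show ?thesis unfolding Rn_Bf by (intro continuous_intros c) (use gpos in auto)
qed

lemma R_local:
  assumes sol: "cbf_sol \<gamma> \<beta> (\<lambda>_. 0) p z" and s: "0 \<le> s"
    and R1: "Rn \<gamma> \<beta> (fst (z s)) (snd (z s)) = 1" and y: "snd (z s) > 0"
  obtains d where "d > 0"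
    "\<And>t. s < t \<Longrightarrow> t < s + d \<Longrightarrow> Rn \<gamma> \<beta> (fst (z t)) (snd (z t)) < 1"
    "\<And>t. 0 \<le> t \<Longrightarrow> t < s \<Longrightarrow> s - d < t \<Longrightarrow> Rn \<gamma> \<beta> (fst (z t)) (snd (z t)) > 1"
proof -
  define R where "R t = Rn \<gamma> \<beta> (fst (z t)) (snd (z t))" for t
  define f where "f t = dR (z t) (vf \<gamma> \<beta> 0 (z t))" for t
  have zs: "z s \<in> SS" using cbf_SS[OF sol s] .
  have fs: "f s < 0" unfolding f_def by (rule psi_neg[OF zs y R1])
  have fc: "continuous_on {0..} f"
  proof -
    have "continuous_on {0..} z" using sol by (simp add: cbf_sol_def)
    moreover have "z ` {0..} \<subseteq> SS" using cbf_SS[OF sol] by auto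
    ultimately show ?thesis unfolding f_def using continuous_on_compose2[OF psi_cont] by blast
  qed
  then have "continuous_on {0..} (\<lambda>t. - f t)" by (intro continuous_intros)
  then obtain d where d: "d > 0" "\<And>t. t \<in> {0..} \<Longrightarrow> \<bar>t - s\<bar> < d \<Longrightarrow> - f t > 0"
    using cont_pos_nbhd[of "{0..}" "\<lambda>t. - f t" s] s fs by auto
  have fneg: "f t < 0" if "0 \<le> t" "\<bar>t - s\<bar> < d" for t
    using d(2)[of t] that by auto
  have der: "\<exists>S. finite S \<and> (\<forall>r\<in>{a<..<b} - S. ((\<lambda>r. - R r) has_real_derivative - f r) (at r))" if a0: "0 \<le> a" for a b
  proof -
    obtain S where S: "finite S" "\<And>r. r \<in> {a<..<b} - S \<Longrightarrow> (z has_vector_derivative vf \<gamma> \<beta> 0 (z r)) (at r)"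
      using cbf_der[OF sol a0, of b] by auto
    have "((\<lambda>r. - R r) has_real_derivative - f r) (at r)" if r: "r \<in> {a<..<b} - S" for r
    proof -
      have "z r \<in> U" using cbf_SS[OF sol, of r] r \<open>0 \<le> a\<close> SSU by auto
      then show ?thesis unfolding R_def f_def by (intro derivative_intros Rq_chain S(2) r)
    qed
    then show ?thesis using S(1) by blast
  qed
  show ?thesis
  proof (rule that[OF d(1)])
    fix t assume t: "s < t" "t < s + d"
    obtain S where S: "finite S" "\<forall>r\<in>{s<..<t} - S. ((\<lambda>r. - R r) has_real_derivative - f r) (at r)"
      using der[OF s, of t] by blast
    have "(\<lambda>r. - R r) s < (\<lambda>r. - R r) t"
    proof (rule mono_fin_strict[OF S(1) t(1)])
      show "continuous_on {s..t} (\<lambda>r. - R r)" unfolding R_def using R_cont[OF sol s] by (intro continuous_intros)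
      show "\<And>r. r \<in> {s<..<t} - S \<Longrightarrow> ((\<lambda>r. - R r) has_real_derivative - f r) (at r)" using S(2) by blast
      show "\<And>r. r \<in> {s<..<t} - S \<Longrightarrow> 0 < - f r" using fneg s t by auto
    qed
    then show "Rn \<gamma> \<beta> (fst (z t)) (snd (z t)) < 1" using R1 by (simp add: R_def)
  next
    fix t assume t: "0 \<le> t" "t < s" "s - d < t"
    obtain S where S: "finite S" "\<forall>r\<in>{t<..<s} - S. ((\<lambda>r. - R r) has_real_derivative - f r) (at r)"
      using der[OF t(1), of s] by blast
    have "(\<lambda>r. - R r) t < (\<lambda>r. - R r) s"
    proof (rule mono_fin_strict[OF S(1) t(2)])
      show "continuous_on {t..s} (\<lambda>r. - R r)" unfolding R_def using R_cont[OF sol t(1)] by (intro continuous_intros)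
      show "\<And>r. r \<in> {t<..<s} - S \<Longrightarrow> ((\<lambda>r. - R r) has_real_derivative - f r) (at r)" using S(2) by blast
      show "\<And>r. r \<in> {t<..<s} - S \<Longrightarrow> 0 < - f r" using fneg t by auto
    qed
    then show "Rn \<gamma> \<beta> (fst (z t)) (snd (z t)) > 1" using R1 by (simp add: R_def)
  qed
qed

lemma R_inv:
  assumes sol: "cbf_sol \<gamma> \<beta> (\<lambda>_. 0) p z" and y: "snd p > 0" and t0: "0 \<le> t0"
    and R0: "Rn \<gamma> \<beta> (fst (z t0)) (snd (z t0)) \<le> 1" and t: "t0 < t"
  shows "Rn \<gamma> \<beta> (fst (z t)) (snd (z t)) < 1"
proof -
  define R where "R t = Rn \<gamma> \<beta> (fst (z t)) (snd (z t))" for t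
  have ypos: "snd (z r) > 0" if "0 \<le> r" for r using cbf_y_pos[OF sol _ y that] by simp
  obtain d where d: "d > 0" "\<And>r. t0 < r \<Longrightarrow> r < t0 + d \<Longrightarrow> R r < 1"
  proof (cases "R t0 = 1")
    case True
    have T: "Rn \<gamma> \<beta> (fst (z t0)) (snd (z t0)) = 1" using True by (simp add: R_def)
    obtain d where "d > 0" "\<And>t. t0 < t \<Longrightarrow> t < t0 + d \<Longrightarrow> Rn \<gamma> \<beta> (fst (z t)) (snd (z t)) < 1"
      "\<And>t. 0 \<le> t \<Longrightarrow> t < t0 \<Longrightarrow> t0 - d < t \<Longrightarrow> Rn \<gamma> \<beta> (fst (z t)) (snd (z t)) > 1"
      by (rule R_local[OF sol t0 T ypos[OF t0]]) blast
    note dd = this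
    show ?thesis by (rule that[of d]) (use dd in \<open>auto simp: R_def\<close>)
  next
    case False
    then have "R t0 < 1" using R0 by (simp add: R_def)
    have "continuous_on {t0..t0+1} (\<lambda>r. 1 - R r)" using R_cont[OF sol t0] unfolding R_def by (intro continuous_intros)
    then obtain d where d: "d > 0" "\<And>r. r \<in> {t0..t0+1} \<Longrightarrow> \<bar>r - t0\<bar> < d \<Longrightarrow> 1 - R r > 0"
      using cont_pos_nbhd[of "{t0..t0+1}" "\<lambda>r. 1 - R r" t0] \<open>R t0 < 1\<close> by auto
    show ?thesis
    proof (rule that[of "min d 1"])
      fix r assume "t0 < r" "r < t0 + min d 1"
      then show "R r < 1" using d(2)[of r] by auto
    qed (use d in auto)
  qed
  show ?thesis
  proof (rule ccontr)
    assume "\<not> ?thesis"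
    then have Rt: "1 \<le> R t" by (simp add: R_def)
    obtain m0 where m: "0 < m0" "m0 \<le> t - t0" "m0 \<le> d" using d(1) t by (intro that[of "min d (t - t0)"]) auto
    define t1 where "t1 = t0 + m0 / 2"
    have t1a: "t0 < t1" unfolding t1_def using m by linarith
    have t1b: "t1 < t" unfolding t1_def using m by linarith
    have t1c: "t1 < t0 + d" unfolding t1_def using m by linarith
    note t1 = t1a t1b t1c
    have Rt1: "R t1 < 1" using d(2) t1 by auto
    obtain s where s: "t1 < s" "s \<le> t" "R s = 1" "\<And>r. t1 \<le> r \<Longrightarrow> r < s \<Longrightarrow> R r < 1"
      using first_cross[of t1 t R 1] t1 Rt1 Rt R_cont[OF sol, of t1 t] t0 unfolding R_def by auto
    obtain e where e: "e > 0" "\<And>r. 0 \<le> r \<Longrightarrow> r < s \<Longrightarrow> s - e < r \<Longrightarrow> R r > 1"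
    proof -
      have s0: "0 \<le> s" using s t0 t1 by simp
      have T: "Rn \<gamma> \<beta> (fst (z s)) (snd (z s)) = 1" using s(3) by (simp add: R_def)
      obtain e where "e > 0" "\<And>t. s < t \<Longrightarrow> t < s + e \<Longrightarrow> Rn \<gamma> \<beta> (fst (z t)) (snd (z t)) < 1"
        "\<And>t. 0 \<le> t \<Longrightarrow> t < s \<Longrightarrow> s - e < t \<Longrightarrow> Rn \<gamma> \<beta> (fst (z t)) (snd (z t)) > 1"
        by (rule R_local[OF sol s0 T ypos[OF s0]]) blast
      note ee = this
      show ?thesis by (rule that[of e]) (use ee in \<open>auto simp: R_def\<close>)
    qed
    define r where "r = max t1 (s - e / 2)"
    have "R r > 1" using e s t1 t0 by (intro e(2)) (auto simp: r_def)
    moreover have "R r < 1" using s e by (intro s(4)) (auto simp: r_def)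
    ultimately show False by simp
  qed
qed

lemma B_dx:
  assumes "(x, y) \<in> U"
  shows "((\<lambda>x. \<beta> x y) has_real_derivative b1 (x, y)) (at x)"
proof -
  have "((\<lambda>x. (x, y)) has_derivative (\<lambda>h. (h, 0))) (at x)"
    by (auto intro!: derivative_eq_intros)
  from diff_chain_at[OF this bder[OF assms]]
  have "((\<lambda>q. \<beta> (fst q) (snd q)) \<circ> (\<lambda>x. (x, y)) has_derivative (\<lambda>v. b1 (x, y) * fst v + b2 (x, y) * snd v) \<circ> (\<lambda>h. (h, 0))) (at x)"
    by simp
  moreover have "(\<lambda>v. b1 (x, y) * fst v + b2 (x, y) * snd v) \<circ> (\<lambda>h. (h, 0)) = (*) (b1 (x, y))"
    by (rule ext) simp
  ultimately show ?thesis by (simp add: has_field_derivative_def o_def)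
qed

lemma Rn_mono_x:
  assumes p1: "(x1, y) \<in> SS" and p2: "(x2, y) \<in> SS" and x: "x1 < x2"
  shows "Rn \<gamma> \<beta> x1 y < Rn \<gamma> \<beta> x2 y"
proof -
  have "(\<lambda>x. \<beta> x y * x) x1 < (\<lambda>x. \<beta> x y * x) x2"
  proof (rule DERIV_pos_imp_increasing[OF x])
    fix x assume "x1 \<le> x" "x \<le> x2"
    then have xS: "(x, y) \<in> SS" using p1 p2 by (auto simp: SS_def)
    have "((\<lambda>x. \<beta> x y * x) has_real_derivative b1 (x, y) * x + 1 * \<beta> x y) (at x)"
      by (rule DERIV_mult[OF B_dx DERIV_ident]) (use xS SSU in auto)
    moreover have "b1 (x, y) * x + 1 * \<beta> x y > 0" using a1[OF xS] by (simp add: mult.commute)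
    ultimately show "\<exists>y'. ((\<lambda>x. \<beta> x y * x) has_real_derivative y') (at x) \<and> 0 < y'" by blast
  qed
  then show ?thesis using gpos by (simp add: Rn_def divide_strict_right_mono)
qed

end

locale sirphi = sir +
  fixes phi :: "real \<Rightarrow> real \<times> real \<Rightarrow> real \<times> real"
  assumes phi_sol: "\<And>p. p \<in> SS \<Longrightarrow> cbf_sol \<gamma> \<beta> (\<lambda>_. 0) p (\<lambda>t. phi t p)"
begin

lemma phi_SS: "p \<in> SS \<Longrightarrow> 0 \<le> t \<Longrightarrow> phi t p \<in> SS"
  using cbf_SS[OF phi_sol] by blast

lemma phi_0: "p \<in> SS \<Longrightarrow> phi 0 p = p"
  using cbf_init[OF phi_sol] by blast

lemma flow:
  assumes p: "p \<in> SS" and s: "0 \<le> s" and t: "0 \<le> t"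
  shows "phi t (phi s p) = phi (t + s) p"
proof -
  have s1: "cbf_sol \<gamma> \<beta> (\<lambda>_. 0) (phi s p) (\<lambda>t. phi t (phi s p))" by (rule phi_sol[OF phi_SS[OF p s]])
  have s2: "cbf_sol \<gamma> \<beta> (\<lambda>_. 0) (phi s p) (\<lambda>t. phi (t + s) p)"
    using cbf_shift[OF phi_sol[OF p] s] by simp
  show ?thesis using cbf_uniq[OF s1 s2 t] by simp
qed

lemma y0_stay:
  assumes p: "p \<in> SS" and y: "snd p = 0" and t: "0 \<le> t"
  shows "phi t p = p"
proof -
  have "cbf_sol \<gamma> \<beta> (\<lambda>_. 0) p (\<lambda>_. p)"
    unfolding cbf_sol_def using p y
    by (auto intro!: exI[of _ "{}"] simp: has_vector_derivative_const zero_prod_def[symmetric])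
  from cbf_uniq[OF phi_sol[OF p] this t] show ?thesis by simp
qed

end

locale hit = sirphi +
  fixes xbar ybar yhat :: real and lam :: "real \<Rightarrow> real"
  assumes q_SS: "(xbar, ybar) \<in> SS" and Rq1: "Rn \<gamma> \<beta> xbar ybar = 1" and ybar_pos: "0 < ybar"
    and yhat: "0 \<le> yhat" "yhat \<le> ybar"
    and lam_cont: "continuous_on {yhat..ybar} lam"
    and Gcl: "closure (Gamma_minus phi (xbar, ybar)) = {(lam y, y) | y. yhat \<le> y \<and> y \<le> ybar}"
begin

abbreviation GM where "GM \<equiv> Gamma_minus phi (xbar, ybar)"

lemma R_cont_SS: "continuous_on SS (\<lambda>p. Rn \<gamma> \<beta> (fst p) (snd p))"
  unfolding Rn_Bf by (intro continuous_intros Bf_cont) (use gpos in auto)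

lemma GM_SS: "p \<in> GM \<Longrightarrow> p \<in> SS"
  by (simp add: Gamma_minus_def)

lemma GM_R: assumes g: "p \<in> GM" shows "snd p > 0" "Rn \<gamma> \<beta> (fst p) (snd p) \<ge> 1"
proof -
  obtain t where t: "0 \<le> t" "phi t p = (xbar, ybar)" and p: "p \<in> SS" using g by (auto simp: Gamma_minus_def)
  have "snd p \<noteq> 0"
  proof
    assume "snd p = 0"
    then have "phi t p = p" using y0_stay p t by blast
    then show False using t \<open>snd p = 0\<close> ybar_pos by auto
  qed
  then show yp: "snd p > 0" using p by (auto simp: SS_def)
  show "Rn \<gamma> \<beta> (fst p) (snd p) \<ge> 1"
  proof (rule ccontr)
    assume nR: "\<not> Rn \<gamma> \<beta> (fst p) (snd p) \<ge> 1"
    then have R0: "Rn \<gamma> \<beta> (fst (phi 0 p)) (snd (phi 0 p)) \<le> 1" using phi_0[OF p] by simp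
    have "t \<noteq> 0" using t phi_0[OF p] Rq1 nR by auto
    then have "0 < t" using t by simp
    have "Rn \<gamma> \<beta> (fst (phi t p)) (snd (phi t p)) < 1"
      by (rule R_inv[OF phi_sol[OF p] yp order.refl R0 \<open>0 < t\<close>])
    then show False using t Rq1 by simp
  qed
qed

lemma C_props:
  assumes y: "yhat \<le> y" "y \<le> ybar"
  shows "(lam y, y) \<in> SS" "Rn \<gamma> \<beta> (lam y) y \<ge> 1"
proof -
  define A where "A = SS \<inter> (\<lambda>p. Rn \<gamma> \<beta> (fst p) (snd p)) -` {1..}"
  have "closed A" unfolding A_def by (rule continuous_closed_preimage[OF R_cont_SS SS_closed]) auto
  moreover have "GM \<subseteq> A" using GM_R GM_SS by (auto simp: A_def)
  ultimately have "closure GM \<subseteq> A" by (rule closure_minimal[rotated])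
  moreover have "(lam y, y) \<in> closure GM" using Gcl y by auto
  ultimately show "(lam y, y) \<in> SS" "Rn \<gamma> \<beta> (lam y) y \<ge> 1" by (auto simp: A_def)
qed

lemma GM_C: assumes "p \<in> GM" shows "fst p = lam (snd p)" "yhat \<le> snd p" "snd p \<le> ybar"
proof -
  have "p \<in> closure GM" using assms closure_subset by blast
  then show "fst p = lam (snd p)" "yhat \<le> snd p" "snd p \<le> ybar" using Gcl by auto
qed

lemma GM_flow:
  assumes p: "p \<in> SS" and s: "0 \<le> s" and g: "phi s p \<in> GM"
  shows "p \<in> GM"
proof -
  obtain t where t: "0 \<le> t" "phi t (phi s p) = (xbar, ybar)" using g by (auto simp: Gamma_minus_def)
  then have "phi (t + s) p = (xbar, ybar)" using flow[OF p s t(1)] by simp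
  then show ?thesis using p s t by (auto simp: Gamma_minus_def intro!: exI[of _ "t + s"])
qed

lemma C_GM:
  assumes y: "yhat < y" "y \<le> ybar"
  shows "(lam y, y) \<in> GM"
proof -
  define y' where "y' = (yhat + y) / 2"
  have y': "yhat \<le> y'" "y' \<le> ybar" using y by (auto simp: y'_def)
  have "(lam y', y') \<in> closure GM" using Gcl y' by auto
  then obtain g where g: "g \<in> GM" "dist g (lam y', y') < (y - yhat) / 2"
    using y unfolding closure_approachable by (metis diff_gt_0_iff_gt half_gt_zero)
  have "\<bar>snd g - y'\<bar> \<le> dist g (lam y', y')"
    using abs_snd_le[of "g - (lam y', y')"] by (simp add: dist_norm)
  moreover have "snd g - y' \<le> \<bar>snd g - y'\<bar>" by simp
  ultimately have gy: "snd g < y" using g(2) unfolding y'_def by (simp add: field_simps)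
  obtain sg where sg: "0 \<le> sg" "phi sg g = (xbar, ybar)" and gS: "g \<in> SS" using g(1) by (auto simp: Gamma_minus_def)
  have cont: "continuous_on {0..sg} (\<lambda>t. snd (phi t g))"
    using cbf_cont[OF phi_sol[OF gS], of 0 sg] by (intro continuous_intros) auto
  obtain ts where ts: "0 \<le> ts" "ts \<le> sg" "snd (phi ts g) = y"
    using IVT'[of "\<lambda>t. snd (phi t g)" 0 y sg] gy y sg cont phi_0[OF gS] by auto
  have "phi (sg - ts) (phi ts g) = (xbar, ybar)" using flow[OF gS ts(1), of "sg - ts"] ts sg by simp
  then have "phi ts g \<in> GM" using phi_SS[OF gS ts(1)] ts by (auto simp: Gamma_minus_def intro!: exI[of _ "sg - ts"])
  then have "fst (phi ts g) = lam y" using GM_C ts by metis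
  then have "phi ts g = (lam y, y)" using ts by (metis prod.collapse)
  then show ?thesis using \<open>phi ts g \<in> GM\<close> by simp
qed

end

context hit
begin

lemma q_GM: "(xbar, ybar) \<in> GM"
  using q_SS phi_0[OF q_SS] by (auto simp: Gamma_minus_def intro!: exI[of _ 0])

lemma x_eq_xbar:
  assumes "(x, ybar) \<in> SS" "Rn \<gamma> \<beta> x ybar = 1"
  shows "x = xbar"
proof (rule ccontr)
  assume "x \<noteq> xbar"
  then consider "x < xbar" | "xbar < x" by linarith
  then show False
  proof cases
    case 1 then show False using Rn_mono_x[OF assms(1) q_SS] assms Rq1 by simp
  next
    case 2 then show False using Rn_mono_x[OF q_SS assms(1)] assms Rq1 by simp
  qed
qed

lemma hitting:
  assumes p0D: "(x0, y0) \<in> D_plus ybar yhat lam"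
  obtains a where "0 \<le> a" "T_hit phi xbar ybar (x0, y0) = a" "phi a (x0, y0) \<in> J_set xbar ybar"
    "\<And>t. 0 \<le> t \<Longrightarrow> t < a \<Longrightarrow> snd (phi t (x0, y0)) < ybar"
proof -
  define p0 where "p0 = (x0, y0)"
  have p0: "p0 \<in> SS" "0 < y0" "y0 \<le> ybar" "yhat \<le> y0" "lam y0 < x0" using p0D by (auto simp: D_plus_def p0_def)
  have sol: "cbf_sol \<gamma> \<beta> (\<lambda>_. 0) p0 (\<lambda>t. phi t p0)" by (rule phi_sol[OF p0(1)])
  define X where "X t = fst (phi t p0)" for t
  define Y where "Y t = snd (phi t p0)" for t
  define R where "R t = Rn \<gamma> \<beta> (X t) (Y t)" for t
  have PS: "0 \<le> t \<Longrightarrow> (X t, Y t) \<in> SS" for t using phi_SS[OF p0(1)] by (simp add: X_def Y_def)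
  have P0: "X 0 = x0" "Y 0 = y0" using phi_0[OF p0(1)] by (auto simp: X_def Y_def p0_def)
  have Ypos: "0 \<le> t \<Longrightarrow> Y t > 0" for t using cbf_y_pos[OF sol _ _] p0 by (simp add: Y_def p0_def)
  have Rc: "continuous_on {a..b} R" if a0: "0 \<le> a" for a b using R_cont[OF sol a0] by (simp add: R_def X_def Y_def)
  have Yc: "continuous_on {a..b} Y" if a0: "0 \<le> a" for a b
    using cbf_cont[OF sol a0, of b] unfolding Y_def by (intro continuous_intros)
  have Xc: "continuous_on {a..b} X" if a0: "0 \<le> a" for a b
    using cbf_cont[OF sol a0, of b] unfolding X_def by (intro continuous_intros)
  have der: "\<exists>S. finite S \<and> (\<forall>r\<in>{a<..<b} - S. (X has_real_derivative - \<gamma> * R r * Y r) (at r)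
                 \<and> (Y has_real_derivative \<gamma> * (R r - 1) * Y r) (at r))" if a0: "0 \<le> a" for a b
  proof -
    obtain S where S: "finite S" "\<And>r. r \<in> {a<..<b} - S \<Longrightarrow> ((\<lambda>t. phi t p0) has_vector_derivative vf \<gamma> \<beta> 0 (phi r p0)) (at r)"
      using cbf_der[OF sol a0, of b] by auto
    show ?thesis
    proof (intro exI conjI ballI)
      show "finite S" by fact
      fix r assume r: "r \<in> {a<..<b} - S"
      show "(X has_real_derivative - \<gamma> * R r * Y r) (at r)"
        using hvd_fst[OF S(2)[OF r]] unfolding X_def R_def Y_def by (simp add: vf_def fun_eq_iff)
      show "(Y has_real_derivative \<gamma> * (R r - 1) * Y r) (at r)"
        using hvd_snd[OF S(2)[OF r]] unfolding X_def R_def Y_def by (simp add: vf_def fun_eq_iff)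
    qed
  qed
  have C0: "(lam y0, y0) \<in> SS" "Rn \<gamma> \<beta> (lam y0) y0 \<ge> 1" using C_props p0 by auto
  have R0: "R 0 > 1"
    using Rn_mono_x[OF C0(1), of x0] p0 C0 P0 by (simp add: R_def p0_def)
  have notGM: "p0 \<notin> GM"
  proof
    assume "p0 \<in> GM"
    then have "fst p0 = lam (snd p0)" by (rule GM_C(1))
    then have "x0 = lam y0" by (simp add: p0_def)
    then show False using p0 by simp
  qed
  have "\<exists>tb\<ge>0. R tb \<le> 1"
  proof (rule ccontr)
    assume "\<not> ?thesis"
    then have Rg: "\<And>t. 0 \<le> t \<Longrightarrow> R t > 1" by force
    have Yge: "y0 \<le> Y t" if t: "0 \<le> t" for t
    proof -
      obtain S where S: "finite S" "\<forall>r\<in>{0<..<t} - S. (Y has_real_derivative \<gamma> * (R r - 1) * Y r) (at r)"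
        using der[of 0 t] by auto
      have "Y 0 \<le> Y t"
      proof (rule mono_fin[OF S(1) t Yc[OF order.refl]])
        show "\<And>r. r \<in> {0<..<t} - S \<Longrightarrow> (Y has_real_derivative \<gamma> * (R r - 1) * Y r) (at r)" using S by blast
        fix r assume "r \<in> {0<..<t} - S"
        then show "0 \<le> \<gamma> * (R r - 1) * Y r" using Rg[of r] Ypos[of r] gpos by auto
      qed
      then show ?thesis using P0 by simp
    qed
    define tb where "tb = x0 / (\<gamma> * y0) + 1"
    have tb: "0 \<le> tb" using p0 PS[of 0] P0 gpos by (auto simp: tb_def SS_def)
    obtain S where S: "finite S" "\<forall>r\<in>{0<..<tb} - S. (X has_real_derivative - \<gamma> * R r * Y r) (at r)"
      using der[of 0 tb] by auto
    have "(\<lambda>t. - (X t + \<gamma> * y0 * t)) 0 \<le> (\<lambda>t. - (X t + \<gamma> * y0 * t)) tb"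
    proof (rule mono_fin[OF S(1) tb])
      show "continuous_on {0..tb} (\<lambda>t. - (X t + \<gamma> * y0 * t))" using Xc[OF order.refl] by (intro continuous_intros)
      fix r assume r: "r \<in> {0<..<tb} - S"
      show "((\<lambda>t. - (X t + \<gamma> * y0 * t)) has_real_derivative - (- \<gamma> * R r * Y r + \<gamma> * y0 * 1)) (at r)"
        using S(2) r by (auto intro!: derivative_eq_intros)
      have "Y r < R r * Y r" using Rg[of r] Ypos[of r] r by auto
      then have "y0 \<le> R r * Y r" using Yge[of r] r by auto
      then show "0 \<le> - (- \<gamma> * R r * Y r + \<gamma> * y0 * 1)" using gpos by (simp add: mult.assoc)
    qed
    then have "X tb \<le> x0 - \<gamma> * y0 * tb" using P0 by simp
    also have "\<dots> = - \<gamma> * y0" using gpos p0 by (simp add: tb_def field_simps)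
    also have "\<dots> < 0" using gpos p0 by simp
    finally show False using PS[OF tb] by (simp add: SS_def)
  qed
  then obtain tb where tb: "0 \<le> tb" "R tb \<le> 1" by blast
  obtain t1 where t1: "0 < t1" "t1 \<le> tb" "- R t1 = - 1" "\<And>r. 0 \<le> r \<Longrightarrow> r < t1 \<Longrightarrow> - R r < - 1"
    using first_cross[of 0 tb "\<lambda>t. - R t" "-1"] tb R0 Rc[OF order.refl, of tb]
    by (auto intro: continuous_intros)
  have Rt1: "R t1 = 1" and Rbefore: "\<And>r. 0 \<le> r \<Longrightarrow> r < t1 \<Longrightarrow> R r > 1" using t1 by auto
  have Ymono: "Y a < Y b" if ab: "0 \<le> a" "a < b" "b \<le> t1" for a b
  proof -
    obtain S where S: "finite S" "\<forall>r\<in>{a<..<b} - S. (Y has_real_derivative \<gamma> * (R r - 1) * Y r) (at r)"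
      using der[OF ab(1), of b] by auto
    show ?thesis
    proof (rule mono_fin_strict[OF S(1) ab(2) Yc[OF ab(1)]])
      show "\<And>r. r \<in> {a<..<b} - S \<Longrightarrow> (Y has_real_derivative \<gamma> * (R r - 1) * Y r) (at r)" using S by blast
      fix r assume "r \<in> {a<..<b} - S"
      then show "0 < \<gamma> * (R r - 1) * Y r" using Rbefore[of r] Ypos[of r] gpos ab by auto
    qed
  qed
  have Ymono': "Y a \<le> Y b" if ab: "0 \<le> a" "a \<le> b" "b \<le> t1" for a b
    using Ymono[of a b] ab by (cases "a = b") auto
  show ?thesis
  proof (cases "ybar \<le> Y t1")
    case True
    obtain a where a: "0 \<le> a" "a \<le> t1" "Y a = ybar" "\<And>r. 0 \<le> r \<Longrightarrow> r < a \<Longrightarrow> Y r < ybar"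
    proof (cases "y0 = ybar")
      case True
      then show ?thesis using that[of 0] P0 t1 by auto
    next
      case False
      then have "Y 0 < ybar" using p0 P0 by auto
      then obtain s where "0 < s" "s \<le> t1" "Y s = ybar" "\<And>r. 0 \<le> r \<Longrightarrow> r < s \<Longrightarrow> Y r < ybar"
        using first_cross[of 0 t1 Y ybar] t1 True Yc[OF order.refl, of t1] by auto
      then show ?thesis using that[of s] by auto
    qed
    have "a \<noteq> t1"
    proof
      assume "a = t1"
      then have "(X t1, ybar) \<in> SS" "Rn \<gamma> \<beta> (X t1) ybar = 1" using PS[of t1] t1 a Rt1 by (auto simp: R_def)
      then have "X t1 = xbar" by (rule x_eq_xbar)
      then have "phi t1 p0 = (xbar, ybar)" using a \<open>a = t1\<close> by (simp add: X_def Y_def prod_eq_iff)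
      then have "p0 \<in> GM" using GM_flow[OF p0(1), of t1] q_GM t1 by simp
      then show False using notGM by simp
    qed
    then have Ra: "R a > 1" using Rbefore[of a] a by auto
    have Xa: "xbar < X a"
    proof (rule ccontr)
      assume "\<not> xbar < X a"
      then consider "X a = xbar" | "X a < xbar" by linarith
      then show False
      proof cases
        case 1 then show False using Ra Rq1 a by (simp add: R_def)
      next
        case 2 then show False using Rn_mono_x[of "X a" ybar xbar] PS[of a] a q_SS Ra Rq1 by (simp add: R_def)
      qed
    qed
    have J: "phi a p0 \<in> J_set xbar ybar"
      using PS[of a] a Xa by (auto simp: J_set_def X_def Y_def SS_def)
    have T: "T_hit phi xbar ybar (x0, y0) = a"
      unfolding T_hit_def p0_def[symmetric]
    proof (rule Least_equality)
      show "0 \<le> a \<and> phi a p0 \<in> J_set xbar ybar" using a J by simp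
      fix t assume t: "0 \<le> t \<and> phi t p0 \<in> J_set xbar ybar"
      show "a \<le> t"
      proof (rule ccontr)
        assume "\<not> a \<le> t"
        then have "Y t < ybar" using a t by auto
        then show False using t by (auto simp: J_set_def Y_def)
      qed
    qed
    show ?thesis
      using that[of a] a T J by (auto simp: Y_def p0_def)
  next
    case False
    have Yr: "Y t \<in> {yhat..ybar}" if "t \<in> {0..t1}" for t
      using Ymono'[of 0 t] Ymono'[of t t1] that P0 p0 False by auto
    define D where "D t = X t - lam (Y t)" for t
    have Dc: "continuous_on {0..t1} D"
    proof -
      have "continuous_on {0..t1} (\<lambda>t. lam (Y t))"
        using continuous_on_compose2[OF lam_cont Yc[OF order.refl, of t1]] Yr by blast
      then show ?thesis unfolding D_def by (intro continuous_intros Xc order.refl)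
    qed
    have D0: "D 0 > 0" using P0 p0 by (simp add: D_def)
    have Dt1: "D t1 \<le> 0"
    proof (rule ccontr)
      assume "\<not> D t1 \<le> 0"
      then have lt: "lam (Y t1) < X t1" by (simp add: D_def)
      have Yt1: "yhat \<le> Y t1" "Y t1 \<le> ybar" using Yr[of t1] t1 by auto
      have "Rn \<gamma> \<beta> (lam (Y t1)) (Y t1) < Rn \<gamma> \<beta> (X t1) (Y t1)"
        using Rn_mono_x[OF C_props(1)[OF Yt1] PS[of t1] lt] t1 by simp
      then show False using C_props(2)[OF Yt1] Rt1 by (simp add: R_def)
    qed
    obtain ts where ts: "0 \<le> ts" "ts \<le> t1" "(\<lambda>t. - D t) ts = 0"
      using IVT'[of "\<lambda>t. - D t" 0 0 t1] D0 Dt1 t1 Dc by (auto intro: continuous_intros)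
    have "ts \<noteq> 0" using ts D0 by auto
    then have "y0 < Y ts" using Ymono[of 0 ts] ts P0 by auto
    moreover have "Y ts < ybar" using Ymono'[of ts t1] ts False by auto
    ultimately have "(lam (Y ts), Y ts) \<in> GM" using p0 by (intro C_GM) auto
    moreover have "phi ts p0 = (lam (Y ts), Y ts)" using ts by (simp add: D_def X_def Y_def prod_eq_iff)
    ultimately have "p0 \<in> GM" using GM_flow[OF p0(1) ts(1)] by simp
    then show ?thesis using notGM by simp
  qed
qed

end

theorem proposition3:
  fixes \<gamma> :: real and \<beta> :: "real \<Rightarrow> real \<Rightarrow> real"
    and beta_x beta_y beta_xx beta_xy beta_yx beta_yy :: "real \<times> real \<Rightarrow> real"
    and phi :: "real \<Rightarrow> real \<times> real \<Rightarrow> real \<times> real"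
    and ytil ybar xbar yhat :: real and lam :: "real \<Rightarrow> real"
    and x0 y0 T0 T1 h0 :: real and u :: "real \<Rightarrow> real" and z :: "real \<Rightarrow> real \<times> real"
  assumes gamma_pos: "\<gamma> > 0"
    and beta_pos: "\<forall>(x, y)\<in>SS. \<beta> x y > 0"
    and beta_C2: "\<exists>U. open U \<and> SS \<subseteq> U \<and>
        (\<forall>p\<in>U. ((\<lambda>q. \<beta> (fst q) (snd q)) has_derivative (\<lambda>v. beta_x p * fst v + beta_y p * snd v)) (at p)
             \<and> (beta_x has_derivative (\<lambda>v. beta_xx p * fst v + beta_xy p * snd v)) (at p)
             \<and> (beta_y has_derivative (\<lambda>v. beta_yx p * fst v + beta_yy p * snd v)) (at p))
        \<and> continuous_on U beta_xx \<and> continuous_on U beta_xy \<and> continuous_on U beta_yx \<and> continuous_on U beta_yy"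
    and assumption1: "\<forall>(x, y)\<in>SS. x * beta_x (x, y) + \<beta> x y > 0 \<and> beta_y (x, y) \<le> 0"
    and beta_10: "\<beta> 1 0 > \<gamma>"
    and ytil: "0 < ytil" "ytil < 1" "Rn \<gamma> \<beta> (1 - ytil) ytil = 1"
    and ytil_unique: "\<forall>y\<in>{0<..<1}. Rn \<gamma> \<beta> (1 - y) y = 1 \<longrightarrow> y = ytil"
    and ybar: "0 < ybar" "ybar < ytil"
    and xbar: "(xbar, ybar) \<in> SS" "Rn \<gamma> \<beta> xbar ybar = 1"
    and phi: "\<forall>p\<in>SS. cbf_sol \<gamma> \<beta> (\<lambda>_. 0) p (\<lambda>t. phi t p)"
    and yhat: "0 \<le> yhat" "yhat \<le> ybar"
    and lam_C1: "\<exists>D. (\<forall>y\<in>{yhat..ybar}. (lam has_real_derivative D y) (at y within {yhat..ybar}))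
                     \<and> continuous_on {yhat..ybar} D"
    and lam_decr: "\<forall>y1\<in>{yhat..ybar}. \<forall>y2\<in>{yhat..ybar}. y1 < y2 \<longrightarrow> lam y2 < lam y1"
    and lam_range: "lam ` {yhat..ybar} \<subseteq> {xbar..1}"
    and lam_ybar: "lam ybar = xbar"
    and Gamma_closure: "closure (Gamma_minus phi (xbar, ybar)) = {(lam y, y) | y. yhat \<le> y \<and> y \<le> ybar}"
    and init: "(x0, y0) \<in> D_plus ybar yhat lam"
    and T0_def: "T0 = T_hit phi xbar ybar (x0, y0)"
    and h0_def: "h0 = h_hit phi xbar ybar (x0, y0)"
    and T1_def: "T1 = T0 + (h0 - xbar) / (\<gamma> * ybar)"
    and u_def: "u = (\<lambda>t. if t < T0 \<or> t > T1 then 0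
                         else rho \<gamma> \<beta> (h0 - \<gamma> * (t - T0) * ybar) ybar)"
    and sol: "cbf_sol \<gamma> \<beta> u (x0, y0) z"
  shows "(\<forall>t. T0 < t \<and> t < T1 \<longrightarrow> z t = (h0 - \<gamma> * (t - T0) * ybar, ybar))
       \<and> (\<forall>t\<ge>0. u t = mu \<gamma> \<beta> ybar (fst (z t)) (snd (z t)))
       \<and> (\<forall>t\<ge>0. snd (z t) \<le> ybar)
       \<and> u integrable_on {0..}
       \<and> integral {0..} u = 1 / (\<gamma> * ybar) * integral {xbar..h0} (\<lambda>x. rho \<gamma> \<beta> x ybar)"
proof -
  obtain U where U: "open U" "SS \<subseteq> U"
    "\<And>p. p \<in> U \<Longrightarrow> ((\<lambda>q. \<beta> (fst q) (snd q)) has_derivative (\<lambda>v. beta_x p * fst v + beta_y p * snd v)) (at p)"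
    "\<And>p. p \<in> U \<Longrightarrow> (beta_x has_derivative (\<lambda>v. beta_xx p * fst v + beta_xy p * snd v)) (at p)"
    "\<And>p. p \<in> U \<Longrightarrow> (beta_y has_derivative (\<lambda>v. beta_yx p * fst v + beta_yy p * snd v)) (at p)"
    using beta_C2 by blast
  have bxc: "continuous_on U beta_x"
    by (rule continuous_at_imp_continuous_on) (use U(4) has_derivative_continuous in blast)
  have byc: "continuous_on U beta_y"
    by (rule continuous_at_imp_continuous_on) (use U(5) has_derivative_continuous in blast)
  obtain Dl where Dl: "\<And>y. y \<in> {yhat..ybar} \<Longrightarrow> (lam has_real_derivative Dl y) (at y within {yhat..ybar})"
    using lam_C1 by blast
  have lamc: "continuous_on {yhat..ybar} lam" by (rule DERIV_continuous_on[OF Dl])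
  interpret H: hit \<gamma> \<beta> beta_x beta_y U phi xbar ybar yhat lam
  proof
    show "\<gamma> > 0" by (rule gamma_pos)
    show "\<And>x y. (x, y) \<in> SS \<Longrightarrow> 0 < \<beta> x y" using beta_pos by auto
    show "open U" "SS \<subseteq> U" by (rule U(1), rule U(2))
    show "\<And>p. p \<in> U \<Longrightarrow> ((\<lambda>q. \<beta> (fst q) (snd q)) has_derivative (\<lambda>v. beta_x p * fst v + beta_y p * snd v)) (at p)"
      by (rule U(3))
    show "continuous_on U beta_x" "continuous_on U beta_y" by (rule bxc, rule byc)
    show "\<And>x y. (x, y) \<in> SS \<Longrightarrow> 0 < x * beta_x (x, y) + \<beta> x y" using assumption1 by auto
    show "\<And>p. p \<in> SS \<Longrightarrow> cbf_sol \<gamma> \<beta> (\<lambda>_. 0) p (\<lambda>t. phi t p)" using phi by auto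
    show "(xbar, ybar) \<in> SS" "Rn \<gamma> \<beta> xbar ybar = 1" by (rule xbar(1), rule xbar(2))
    show "0 < ybar" by (rule ybar(1))
    show "0 \<le> yhat" "yhat \<le> ybar" by (rule yhat(1), rule yhat(2))
    show "continuous_on {yhat..ybar} lam" by (rule lamc)
    show "closure (Gamma_minus phi (xbar, ybar)) = {(lam y, y) |y. yhat \<le> y \<and> y \<le> ybar}" by (rule Gamma_closure)
  qed
  define p0 where "p0 = (x0, y0)"
  have p0S: "p0 \<in> SS" using init by (auto simp: D_plus_def p0_def)
  obtain a where a: "0 \<le> a" "T_hit phi xbar ybar (x0, y0) = a" "phi a (x0, y0) \<in> J_set xbar ybar"
    "\<And>t. 0 \<le> t \<Longrightarrow> t < a \<Longrightarrow> snd (phi t (x0, y0)) < ybar"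
    using H.hitting[OF init] by blast
  have T0a: "T0 = a" using a T0_def by simp
  have Ja: "snd (phi a p0) = ybar" "xbar < fst (phi a p0)" "fst (phi a p0) + snd (phi a p0) \<le> 1"
    using a(3) by (auto simp: J_set_def SS_def p0_def)
  have h0a: "h0 = fst (phi a p0)" using h0_def a(2) by (simp add: h_hit_def p0_def)
  have h0e: "phi T0 p0 = (h0, ybar)" using T0a Ja h0a by (simp add: prod_eq_iff)
  have h0: "xbar < h0" "h0 + ybar \<le> 1" using Ja h0a by auto
  have T0: "0 \<le> T0" using a T0a by simp
  have before: "\<And>t. 0 \<le> t \<Longrightarrow> t < T0 \<Longrightarrow> snd (phi t p0) < ybar" using a T0a p0_def by simp
  have gy: "\<gamma> * ybar > 0" using gamma_pos ybar by simp
  have T01: "T0 < T1" using h0 gy by (simp add: T1_def)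
  have xbar0: "0 < xbar"
  proof -
    have "xbar \<noteq> 0" using xbar(2) by (auto simp: Rn_def)
    then show ?thesis using xbar(1) by (auto simp: SS_def)
  qed
  define xt where "xt t = h0 - \<gamma> * (t - T0) * ybar" for t
  have gnz: "\<gamma> \<noteq> 0" "ybar \<noteq> 0" using gamma_pos ybar by auto
  have kT: "\<gamma> * (T1 - T0) * ybar = h0 - xbar" using gnz by (simp add: T1_def field_simps)
  have xt_T1: "xt T1 = xbar" using kT by (simp add: xt_def)
  have xt_T0: "xt T0 = h0" by (simp add: xt_def)
  have xt_range: "xt t \<in> {xbar..h0}" if "t \<in> {T0..T1}" for t
  proof -
    have "\<gamma> * (t - T0) * ybar \<le> \<gamma> * (T1 - T0) * ybar" using that gy gamma_pos ybar
      by (intro mult_right_mono mult_left_mono) auto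
    also have "\<dots> = h0 - xbar" by (rule kT)
    finally show ?thesis using that gamma_pos ybar by (auto simp: xt_def)
  qed
  have seg: "(x, ybar) \<in> SS" "1 \<le> Rn \<gamma> \<beta> x ybar" "rho \<gamma> \<beta> x ybar = 1 - 1 / Rn \<gamma> \<beta> x ybar"
    "0 \<le> rho \<gamma> \<beta> x ybar" "rho \<gamma> \<beta> x ybar \<le> 1" "(1 - rho \<gamma> \<beta> x ybar) * Rn \<gamma> \<beta> x ybar = 1"
    if x: "x \<in> {xbar..h0}" for x
  proof -
    show xS: "(x, ybar) \<in> SS" using x h0 xbar0 ybar by (auto simp: SS_def)
    show R1: "1 \<le> Rn \<gamma> \<beta> x ybar"
    proof (cases "x = xbar")
      case True then show ?thesis using xbar by simp
    next
      case False then show ?thesis using H.Rn_mono_x[OF xbar(1) xS] x xbar by simp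
    qed
    have bp: "\<beta> x ybar > 0" using beta_pos xS by auto
    have xp: "x > 0" using x xbar0 by simp
    show re: "rho \<gamma> \<beta> x ybar = 1 - 1 / Rn \<gamma> \<beta> x ybar" using bp xp gamma_pos by (simp add: rho_def Rn_def)
    show "0 \<le> rho \<gamma> \<beta> x ybar" using R1 re by simp
    show "rho \<gamma> \<beta> x ybar \<le> 1" using R1 re by simp
    show "(1 - rho \<gamma> \<beta> x ybar) * Rn \<gamma> \<beta> x ybar = 1" using R1 re by simp
  qed
  have u_mid: "u t = rho \<gamma> \<beta> (xt t) ybar" if "t \<in> {T0..T1}" for t using that by (simp add: u_def xt_def)
  have u_out: "u t = 0" if "t < T0 \<or> T1 < t" for t using that by (simp add: u_def)
  have F1: "z t = phi t p0" if "0 \<le> t" "t \<le> T0" for t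
    using H.cbf_uniq[OF sol[folded p0_def] H.phi_sol[OF p0S] that(1)] that u_out by auto
  define L where "L t = (xt t, ybar)" for t
  have F2: "z t = L t" if t: "T0 \<le> t" "t \<le> T1" for t
  proof -
    obtain S where S: "finite S" "\<And>r. r \<in> {T0<..<t} - S \<Longrightarrow> (z has_vector_derivative vf \<gamma> \<beta> (u r) (z r)) (at r)"
      using cbf_der[OF sol T0, of t] by auto
    show ?thesis
    proof (rule H.uniq[OF S(1) t(1)])
      show "continuous_on {T0..t} z" by (rule cbf_cont[OF sol T0])
      show "continuous_on {T0..t} L" unfolding L_def xt_def by (intro continuous_intros)
      show "\<And>r. r \<in> {T0..t} \<Longrightarrow> z r \<in> SS" using cbf_SS[OF sol] T0 by auto
      show "\<And>r. r \<in> {T0..t} \<Longrightarrow> L r \<in> SS" using seg(1) xt_range t by (auto simp: L_def)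
      show "\<And>r. r \<in> {T0<..<t} - S \<Longrightarrow> (z has_vector_derivative vf \<gamma> \<beta> (u r) (z r)) (at r)" by (rule S(2))
      fix r assume r: "r \<in> {T0<..<t} - S"
      have rr: "r \<in> {T0..T1}" using r t by auto
      have K: "(1 - u r) * Rn \<gamma> \<beta> (xt r) ybar = 1" using seg(6)[OF xt_range[OF rr]] u_mid[OF rr] by simp
      have e1: "- (1 - u r) * \<gamma> * Rn \<gamma> \<beta> (xt r) ybar * ybar = - \<gamma> * ybar * ((1 - u r) * Rn \<gamma> \<beta> (xt r) ybar)"
        by (simp add: algebra_simps)
      have "vf \<gamma> \<beta> (u r) (L r) = (- \<gamma> * ybar, 0)"
        unfolding vf_def L_def fst_conv snd_conv e1 K by simp
      moreover have "(L has_vector_derivative (- \<gamma> * ybar, 0)) (at r)"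
        unfolding L_def xt_def has_vector_derivative_def
        by (auto intro!: derivative_eq_intros simp: fun_eq_iff)
      ultimately show "(L has_vector_derivative vf \<gamma> \<beta> (u r) (L r)) (at r)" by simp
    next
      fix r assume "r \<in> {T0<..<t}"
      then have rr: "r \<in> {T0..T1}" using t by auto
      show "u r \<in> {0..1}" using seg(4,5)[OF xt_range[OF rr]] u_mid[OF rr] by simp
    next
      show "z T0 = L T0" using F1[OF T0 order.refl] h0e xt_T0 by (simp add: L_def)
    qed
  qed
  define q where "q = (xbar, ybar)"
  have qS: "q \<in> SS" using xbar(1) by (simp add: q_def)
  have zT1: "z T1 = q" using F2[of T1] T01 xt_T1 by (simp add: L_def q_def)
  have F3: "z (s + T1) = phi s q" if s: "0 \<le> s" for s
  proof -
    have T1p: "0 \<le> T1" using T0 T01 by simp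
    have "cbf_sol \<gamma> \<beta> (\<lambda>r. u (r + T1)) q (\<lambda>r. z (r + T1))" using cbf_shift[OF sol T1p] zT1 by simp
    from H.cbf_uniq[OF this H.phi_sol[OF qS] s] show ?thesis using u_out by auto
  qed
  have after: "snd (phi s q) < ybar" if s: "0 < s" for s
  proof -
    have solq: "cbf_sol \<gamma> \<beta> (\<lambda>_. 0) q (\<lambda>t. phi t q)" by (rule H.phi_sol[OF qS])
    have yq: "snd q > 0" using ybar by (simp add: q_def)
    have Rq: "Rn \<gamma> \<beta> (fst (phi 0 q)) (snd (phi 0 q)) \<le> 1" using H.phi_0[OF qS] xbar by (simp add: q_def)
    obtain S where S: "finite S" "\<And>r. r \<in> {0<..<s} - S \<Longrightarrow> ((\<lambda>t. phi t q) has_vector_derivative vf \<gamma> \<beta> 0 (phi r q)) (at r)"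
      using cbf_der[OF solq order.refl, of s] by auto
    have "(\<lambda>t. - snd (phi t q)) 0 < (\<lambda>t. - snd (phi t q)) s"
    proof (rule mono_fin_strict[OF S(1) s])
      show "continuous_on {0..s} (\<lambda>t. - snd (phi t q))"
        using cbf_cont[OF solq order.refl, of s] by (intro continuous_intros)
      fix r assume r: "r \<in> {0<..<s} - S"
      show "((\<lambda>t. - snd (phi t q)) has_real_derivative - snd (vf \<gamma> \<beta> 0 (phi r q))) (at r)"
        by (intro derivative_intros hvd_snd S(2) r)
      have "Rn \<gamma> \<beta> (fst (phi r q)) (snd (phi r q)) < 1" using H.R_inv[OF solq yq order.refl Rq] r by auto
      moreover have "snd (phi r q) > 0" using H.cbf_y_pos[OF solq _ yq] r by auto
      ultimately show "0 < - snd (vf \<gamma> \<beta> 0 (phi r q))" using gamma_pos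
        by (simp add: vf_def mult_pos_neg mult_neg_pos)
    qed
    then show ?thesis using H.phi_0[OF qS] by (simp add: q_def)
  qed
  have c1: "\<forall>t. T0 < t \<and> t < T1 \<longrightarrow> z t = (h0 - \<gamma> * (t - T0) * ybar, ybar)"
    using F2 by (auto simp: L_def xt_def)
  have c23: "u t = mu \<gamma> \<beta> ybar (fst (z t)) (snd (z t)) \<and> snd (z t) \<le> ybar" if t: "0 \<le> t" for t
  proof -
    consider "t < T0" | "T0 \<le> t \<and> t \<le> T1" | "T1 < t" by linarith
    then show ?thesis
    proof cases
      case 1
      then have "snd (z t) < ybar" using F1[of t] before[of t] t by simp
      then show ?thesis using u_out 1 by (simp add: mu_def)
    next
      case 2
      then have zt: "z t = (xt t, ybar)" using F2 by (simp add: L_def)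
      have "u t = rho \<gamma> \<beta> (xt t) ybar" using u_mid 2 by simp
      moreover have "0 \<le> rho \<gamma> \<beta> (xt t) ybar" using seg(4) xt_range 2 by simp
      ultimately show ?thesis using zt by (simp add: mu_def pos_part_def)
    next
      case 3
      then have "z t = phi (t - T1) q" using F3[of "t - T1"] by simp
      then have "snd (z t) < ybar" using after[of "t - T1"] 3 by simp
      then show ?thesis using u_out 3 by (simp add: mu_def)
    qed
  qed
  define f where "f x = rho \<gamma> \<beta> x ybar" for x
  define I where "I = integral {xbar..h0} f"
  have fc: "continuous_on {xbar..h0} f"
  proof -
    have "continuous_on {xbar..h0} (\<lambda>x. (x, ybar))" by (intro continuous_intros)
    moreover have "(\<lambda>x. (x, ybar)) ` {xbar..h0} \<subseteq> SS" using seg(1) by auto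
    ultimately have "continuous_on {xbar..h0} (\<lambda>x. H.Bf (x, ybar))"
      using continuous_on_compose2[OF H.Bf_cont] by blast
    then have bc: "continuous_on {xbar..h0} (\<lambda>x. \<beta> x ybar)" by (simp add: H.Bf_def)
    have nz: "x * \<beta> x ybar \<noteq> 0" if "x \<in> {xbar..h0}" for x
      using beta_pos seg(1)[OF that] that xbar0 by auto
    show ?thesis unfolding f_def rho_def by (intro continuous_intros bc) (use nz in auto)
  qed
  have Gd: "((\<lambda>x. integral {xbar..x} f) has_vector_derivative f x) (at x within {xbar..h0})" if "x \<in> {xbar..h0}" for x
    by (rule integral_has_vector_derivative[OF fc that])
  have main: "((\<lambda>t. (- \<gamma> * ybar) *\<^sub>R f (xt t)) has_integral
      ((\<lambda>x. integral {xbar..x} f) (xt T1) - (\<lambda>x. integral {xbar..x} f) (xt T0))) {T0..T1}"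
  proof (rule fundamental_theorem_of_calculus)
    show "T0 \<le> T1" using T01 by simp
    fix t assume t: "t \<in> {T0..T1}"
    have xd: "(xt has_vector_derivative (- \<gamma> * ybar)) (at t within {T0..T1})"
      unfolding xt_def has_vector_derivative_def by (auto intro!: derivative_eq_intros simp: fun_eq_iff)
    have "((\<lambda>x. integral {xbar..x} f) has_vector_derivative f (xt t)) (at (xt t) within xt ` {T0..T1})"
      by (rule has_vector_derivative_within_subset[OF Gd[OF xt_range[OF t]]]) (use xt_range in auto)
    from vector_diff_chain_within[OF xd this]
    show "((\<lambda>t. integral {xbar..xt t} f) has_vector_derivative (- \<gamma> * ybar) *\<^sub>R f (xt t)) (at t within {T0..T1})"
      by (simp add: o_def)
  qed
  then have "((\<lambda>t. (- \<gamma> * ybar) * f (xt t)) has_integral (- I)) {T0..T1}"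
    using xt_T1 xt_T0 by (simp add: I_def)
  then have "((\<lambda>t. (- 1 / (\<gamma> * ybar)) *\<^sub>R ((- \<gamma> * ybar) * f (xt t))) has_integral (- 1 / (\<gamma> * ybar)) *\<^sub>R (- I)) {T0..T1}"
    by (rule has_integral_cmul)
  moreover have "\<And>t. (- 1 / (\<gamma> * ybar)) *\<^sub>R ((- \<gamma> * ybar) * f (xt t)) = f (xt t)" using gnz by simp
  ultimately have "((\<lambda>t. f (xt t)) has_integral 1 / (\<gamma> * ybar) * I) {T0..T1}" by simp
  then have "(u has_integral 1 / (\<gamma> * ybar) * I) {T0..T1}"
    by (rule has_integral_cong[THEN iffD1, rotated]) (simp add: u_mid f_def)
  then have "(u has_integral 1 / (\<gamma> * ybar) * I) {0..}"
    by (rule has_integral_on_superset) (use u_out T0 in auto)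
  then have c4: "u integrable_on {0..}" "integral {0..} u = 1 / (\<gamma> * ybar) * I"
    by (auto simp: has_integral_iff)
  have fe: "f = (\<lambda>x. rho \<gamma> \<beta> x ybar)" by (rule ext) (simp add: f_def)
  show ?thesis using c1 c23 c4 unfolding I_def fe by blast
qed

end
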